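(* Let $n\ge 3$ and let $\Gamma(D_{2n})$ be the incidence system defined in the context. If $n>3$, then $\Gamma(D_{2n})$ is an incidence geometric representation for the dihedral group $D_{2n}$ of order $2n$. If $n=3$, then $\Gamma(D_6)$ is a weak incidence geometric representation for $D_6$.
   Context: An incidence system is a quadruple $\Gamma=(X,*,t,I)$ where $X$ is a set of elements, $I$ a finite set of types, $t:X\to I$ a surjective type function, and $*$ a symmetric binary relation on $X$ (incidence) such that no two elements of the same type are incident. A correlation of $\Gamma$ is a permutation $\alpha$ of $X$ such that for all $x,y\in X$: $t(x)=t(y)\iff t(\alpha(x))=t(\alpha(y))$, and $x*y\iff \alpha(x)*\alpha(y)$. The correlations form a group $\mathrm{Aut}(\Gamma)$; its normal subgroup of correlations with $t(\alpha(x))=t(x)$ for all $x$ is denoted $\mathrm{Aut}_I(\Gamma)$. For groups $H\le K$, an incidence geometric representation for the pair $(H,K)$ is an incidence system $\Gamma$ together with isomorphisms $\varphi_1:H\to\mathrm{Aut}_I(\Gamma)$ and $\varphi_2:K\to\mathrm{Aut}(\Gamma)$ such that $\varphi_2|_H=\varphi_1$ (with $\mathrm{Aut}_I(\Gamma)\subseteq \mathrm{Aut}(\Gamma)$ the inclusion). An incidence geometric representation for a group $G$ is one for the pair $(\mathrm{Inn}(G),\mathrm{Aut}(G))$. If $\varphi_1,\varphi_2$ are only required to be injective homomorphisms (with the same compatibility), the representation is called weak. Construction of $\Gamma(D_{2n})$. Identify the vertex set $V$ of the $n$-gon with $\mathbb{Z}_n$. Let $\tau(n)=\{k: 1\le k\le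 n-1,\ \gcd(k,n)=1\}$, and for $k\in\tau(n)$ let $E_k=\{\{x,x+k\}: x\in\mathbb{Z}_n\}$ (so $E_k=E_{n-k}$). Let $\bar\tau(n)=\{k\in\tau(n): k<n-k\}$ (one representative of each pair $\{k,n-k\}$). If $n$ is odd: the elements are $V\sqcup\bigsqcup_{k\in\bar\tau(n)}E_k$, the type set is $\{0\}\cup\bar\tau(n)$, vertices have type $0$ and elements of $E_k$ have type $k$; a vertex $v$ and an element $e\in E_k$ are incident iff $v\in e$; any $e\in E_i$ and $f\in E_j$ with $i\ne j$ are incident; there are no other incidences. If $n$ is even: let $V_0$ be the even residues and $V_{-1}$ the odd residues in $\mathbb{Z}_n$. The elements are $V_{-1}\sqcup V_0\sqcup\bigsqcup_{k\in\bar\tau(n)}E_k$, the type set is $\{-1,0\}\cup\bar\tau(n)$, elements of $V_{-1}$, $V_0$, $E_k$ have types $-1$, $0$, $k$ respectively; a vertex $v$ and $e\in E_k$ are incident iff $v\in e$; any $e\in E_i$, $f\in E_j$ with $i\neq j$ are incident; every element of $V_0$ is incident to every element of $V_{-1}$; there are no other incidences. *)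

theory Defs
  imports "HOL-Algebra.Algebra"
begin

definition incidence_system ::
  "'a set \<Rightarrow> ('a \<Rightarrow> 'a \<Rightarrow> bool) \<Rightarrow> ('a \<Rightarrow> 'i) \<Rightarrow> 'i set \<Rightarrow> bool" where
  "incidence_system S inc t I \<longleftrightarrow>
     finite I \<and> t ` S = I \<and>
     (\<forall>x\<in>S. \<forall>y\<in>S. inc x y \<longleftrightarrow> inc y x) \<and>
     (\<forall>x\<in>S. \<forall>y\<in>S. t x = t y \<longrightarrow> \<not> inc x y)"

definition correlations ::
  "'a set \<Rightarrow> ('a \<Rightarrow> 'a \<Rightarrow> bool) \<Rightarrow> ('a \<Rightarrow> 'i) \<Rightarrow> ('a \<Rightarrow> 'a) set" where
  "correlations S inc t =
     {\<alpha> \<in> Bij S. \<forall>x\<in>S. \<forall>y\<in>S.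
        (t x = t y \<longleftrightarrow> t (\<alpha> x) = t (\<alpha> y)) \<and> (inc x y \<longleftrightarrow> inc (\<alpha> x) (\<alpha> y))}"

definition CorrGroup ::
  "'a set \<Rightarrow> ('a \<Rightarrow> 'a \<Rightarrow> bool) \<Rightarrow> ('a \<Rightarrow> 'i) \<Rightarrow> ('a \<Rightarrow> 'a) monoid" where
  "CorrGroup S inc t = (BijGroup S) \<lparr>carrier := correlations S inc t\<rparr>"

definition TypePresGroup ::
  "'a set \<Rightarrow> ('a \<Rightarrow> 'a \<Rightarrow> bool) \<Rightarrow> ('a \<Rightarrow> 'i) \<Rightarrow> ('a \<Rightarrow> 'a) monoid" where
  "TypePresGroup S inc t =
     (BijGroup S) \<lparr>carrier := {\<alpha> \<in> correlations S inc t. \<forall>x\<in>S. t (\<alpha> x) = t x}\<rparr>"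

definition igr ::
  "('g, 'm) monoid_scheme \<Rightarrow> ('g, 'n) monoid_scheme \<Rightarrow>
   'a set \<Rightarrow> ('a \<Rightarrow> 'a \<Rightarrow> bool) \<Rightarrow> ('a \<Rightarrow> 'i) \<Rightarrow> 'i set \<Rightarrow> bool" where
  "igr H K S inc t I \<longleftrightarrow> incidence_system S inc t I \<and>
     (\<exists>\<phi>1 \<phi>2. \<phi>1 \<in> iso H (TypePresGroup S inc t) \<and> \<phi>2 \<in> iso K (CorrGroup S inc t) \<and>
              (\<forall>h\<in>carrier H. \<phi>2 h = \<phi>1 h))"

definition weak_igr ::
  "('g, 'm) monoid_scheme \<Rightarrow> ('g, 'n) monoid_scheme \<Rightarrow>
   'a set \<Rightarrow> ('a \<Rightarrow> 'a \<Rightarrow> bool) \<Rightarrow> ('a \<Rightarrow> 'i) \<Rightarrow> 'i set \<Rightarrow> bool" where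
  "weak_igr H K S inc t I \<longleftrightarrow> incidence_system S inc t I \<and>
     (\<exists>\<phi>1 \<phi>2. \<phi>1 \<in> hom H (TypePresGroup S inc t) \<and> inj_on \<phi>1 (carrier H) \<and>
              \<phi>2 \<in> hom K (CorrGroup S inc t) \<and> inj_on \<phi>2 (carrier K) \<and>
              (\<forall>h\<in>carrier H. \<phi>2 h = \<phi>1 h))"

definition inner_auts :: "('g, 'm) monoid_scheme \<Rightarrow> ('g \<Rightarrow> 'g) set" where
  "inner_auts G = {(\<lambda>x\<in>carrier G. g \<otimes>\<^bsub>G\<^esub> x \<otimes>\<^bsub>G\<^esub> inv\<^bsub>G\<^esub> g) | g. g \<in> carrier G}"

definition InnGroup :: "('g, 'm) monoid_scheme \<Rightarrow> ('g \<Rightarrow> 'g) monoid" where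
  "InnGroup G = BijGroup (carrier G) \<lparr>carrier := inner_auts G\<rparr>"

definition igr_group :: "('g, 'm) monoid_scheme \<Rightarrow>
   'a set \<Rightarrow> ('a \<Rightarrow> 'a \<Rightarrow> bool) \<Rightarrow> ('a \<Rightarrow> 'i) \<Rightarrow> 'i set \<Rightarrow> bool" where
  "igr_group G S inc t I \<longleftrightarrow> igr (InnGroup G) (AutoGroup G) S inc t I"

definition weak_igr_group :: "('g, 'm) monoid_scheme \<Rightarrow>
   'a set \<Rightarrow> ('a \<Rightarrow> 'a \<Rightarrow> bool) \<Rightarrow> ('a \<Rightarrow> 'i) \<Rightarrow> 'i set \<Rightarrow> bool" where
  "weak_igr_group G S inc t I \<longleftrightarrow> weak_igr (InnGroup G) (AutoGroup G) S inc t I"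

text \<open>Element (r, s) stands for the symmetry x \<mapsto> (if s then -x else x) + r of Z_n,
  i.e. rho^r sigma^s with rho the rotation and sigma a reflection.\<close>
definition dihedral :: "nat \<Rightarrow> (nat \<times> bool) monoid" where
  "dihedral n =
    \<lparr>carrier = {..<n} \<times> UNIV,
     monoid.mult = (\<lambda>(r1, s1) (r2, s2). ((r1 + (if s1 then n - r2 else r2)) mod n, s1 \<noteq> s2)),
     monoid.one = (0, False)\<rparr>"

definition tau :: "nat \<Rightarrow> nat set" where
  "tau n = {k. 1 \<le> k \<and> k \<le> n - 1 \<and> coprime k n}"

definition tau_bar :: "nat \<Rightarrow> nat set" where
  "tau_bar n = {k \<in> tau n. k < n - k}"

definition Eset :: "nat \<Rightarrow> nat \<Rightarrow> nat set set" where
  "Eset n k = {{x, (x + k) mod n} | x. x < n}"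

definition Dgam_elems :: "nat \<Rightarrow> (nat + nat \<times> nat set) set" where
  "Dgam_elems n = Inl ` {..<n} \<union> {Inr (k, e) | k e. k \<in> tau_bar n \<and> e \<in> Eset n k}"

definition Dgam_types :: "nat \<Rightarrow> int set" where
  "Dgam_types n = (if even n then {-1, 0} else {0}) \<union> int ` tau_bar n"

definition Dgam_type :: "nat \<Rightarrow> nat + nat \<times> nat set \<Rightarrow> int" where
  "Dgam_type n x = (case x of
       Inl v \<Rightarrow> (if even n \<and> odd v then -1 else 0)
     | Inr (k, e) \<Rightarrow> int k)"

definition Dgam_inc :: "nat \<Rightarrow> nat + nat \<times> nat set \<Rightarrow> nat + nat \<times> nat set \<Rightarrow> bool" where
  "Dgam_inc n x y = (case (x, y) of
       (Inl u, Inl v) \<Rightarrow> even n \<and> (even u \<noteq> even v)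
     | (Inl v, Inr (k, e)) \<Rightarrow> v \<in> e
     | (Inr (k, e), Inl v) \<Rightarrow> v \<in> e
     | (Inr (i, e), Inr (j, f)) \<Rightarrow> i \<noteq> j)"

end

theory Submission
  imports Defs "HOL-Number_Theory.Cong"
begin

lemma dih_mult: "(r1, s1) \<otimes>\<^bsub>dihedral n\<^esub> (r2, s2) = ((r1 + (if s1 then n - r2 else r2)) mod n, s1 \<noteq> s2)"
  by (simp add: dihedral_def)
lemma dih_one: "\<one>\<^bsub>dihedral n\<^esub> = (0, False)" by (simp add: dihedral_def)
lemma dih_carrier: "carrier (dihedral n) = {..<n} \<times> UNIV" by (simp add: dihedral_def)

definition NN :: "nat \<Rightarrow> int \<Rightarrow> nat" where "NN n z = nat (z mod int n)"

lemma modplus: "(a + m - b) mod m = (a - b) mod (m::int)"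
proof -
  have "a + m - b = (a - b) + m" by simp
  then have "(a + m - b) mod m = ((a - b) + m) mod m" by (rule arg_cong)
  also have "\<dots> = (a - b) mod m" by (rule mod_add_self2)
  finally show ?thesis .
qed
lemma Nmul: "r2 \<le> n \<Longrightarrow> (r1 + (if s then n - r2 else r2)) mod n = NN n (int r1 + (if s then - int r2 else int r2))"
proof -
  assume "r2 \<le> n"
  then have "int (r1 + (if s then n - r2 else r2)) = int r1 + (if s then - int r2 else int r2) + (if s then int n else 0)" by auto
  then have "int (r1 + (if s then n - r2 else r2)) mod int n = (int r1 + (if s then - int r2 else int r2)) mod int n"
    by (cases s) (simp_all add: modplus)
  then show ?thesis unfolding NN_def by (metis nat_int of_nat_mod)
qed
lemma N_lt: "n > 0 \<Longrightarrow> NN n z < n" unfolding NN_def by (simp add: nat_less_iff)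
lemma N_le: "n > 0 \<Longrightarrow> NN n z \<le> n" using N_lt less_imp_le by blast
lemma int_N: "n > 0 \<Longrightarrow> int (NN n z) = z mod int n" unfolding NN_def by simp
lemma N_add: "n > 0 \<Longrightarrow> NN n (x + int (NN n z)) = NN n (x + z)"
  by (simp add: int_N NN_def mod_simps)
lemma N_add': "n > 0 \<Longrightarrow> NN n (int (NN n z) + x) = NN n (z + x)"
  by (simp add: int_N NN_def mod_simps)
lemma N_sub: "n > 0 \<Longrightarrow> NN n (x - int (NN n z)) = NN n (x - z)"
  by (simp add: int_N NN_def mod_simps)
lemma N_sub': "n > 0 \<Longrightarrow> NN n (int (NN n z) - x) = NN n (z - x)"
  by (simp add: int_N NN_def mod_simps)
lemma N_uminus: "n > 0 \<Longrightarrow> NN n (x + - int (NN n z)) = NN n (x - z)"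
  using N_sub by simp
lemma N_nat: "r < n \<Longrightarrow> NN n (int r) = r" unfolding NN_def by simp
lemma N_eq: "n > 0 \<Longrightarrow> NN n x = NN n y \<longleftrightarrow> x mod int n = y mod int n"
proof
  assume "n > 0" "NN n x = NN n y" then show "x mod int n = y mod int n" using int_N by metis
next
  assume "x mod int n = y mod int n" then show "NN n x = NN n y" by (simp add: NN_def)
qed
lemma dih_mult': "r2 < n \<Longrightarrow> (r1, s1) \<otimes>\<^bsub>dihedral n\<^esub> (r2, s2) = (NN n (int r1 + (if s1 then - int r2 else int r2)), s1 \<noteq> s2)"
  by (simp add: dih_mult Nmul)

lemma nat_eq_via_int: assumes "(x::nat) < n" "y < n" "int x mod int n = int y mod int n" shows "x = y"
proof -
  have "int (x mod n) = int (y mod n)" using assms(3) by (simp only: of_nat_mod)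
  then show ?thesis using assms(1,2) by simp
qed

lemma dihedral_group: assumes "n \<ge> 1" shows "group (dihedral n)"
proof (rule groupI)
  fix x y assume "x \<in> carrier (dihedral n)" "y \<in> carrier (dihedral n)"
  then show "x \<otimes>\<^bsub>dihedral n\<^esub> y \<in> carrier (dihedral n)"
    using assms by (cases x, cases y) (auto simp: dih_mult dih_carrier)
next
  show "\<one>\<^bsub>dihedral n\<^esub> \<in> carrier (dihedral n)" using assms by (simp add: dih_one dih_carrier)
next
  fix x y z assume "x \<in> carrier (dihedral n)" "y \<in> carrier (dihedral n)" "z \<in> carrier (dihedral n)"
  then obtain r1 s1 r2 s2 r3 s3 where x: "x = (r1, s1)" "r1 < n" and y: "y = (r2,s2)" "r2 < n" and z: "z = (r3, s3)" "r3 < n"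
    by (auto simp: dih_carrier)
  have np: "n > 0" using assms by auto
  show "x \<otimes>\<^bsub>dihedral n\<^esub> y \<otimes>\<^bsub>dihedral n\<^esub> z = x \<otimes>\<^bsub>dihedral n\<^esub> (y \<otimes>\<^bsub>dihedral n\<^esub> z)"
    using y z np x by (cases s1; cases s2) (simp_all add: dih_mult' N_lt N_add N_add' N_sub N_sub' N_uminus algebra_simps)
next
  fix x assume "x \<in> carrier (dihedral n)"
  then show "\<one>\<^bsub>dihedral n\<^esub> \<otimes>\<^bsub>dihedral n\<^esub> x = x"
    by (cases x) (auto simp: dih_one dih_mult dih_carrier)
next
  fix x assume "x \<in> carrier (dihedral n)"
  then obtain r s where x: "x = (r, s)" "r < n" by (auto simp: dih_carrier)
  show "\<exists>y\<in>carrier (dihedral n). y \<otimes>\<^bsub>dihedral n\<^esub> x = \<one>\<^bsub>dihedral n\<^esub>"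
  proof (cases s)
    case True then show ?thesis using x by (intro bexI[of _ "(r, True)"]) (auto simp: dih_one dih_mult dih_carrier)
  next
    case False then show ?thesis using x assms
      by (intro bexI[of _ "((n - r) mod n, False)"]) (auto simp: dih_one dih_mult dih_carrier mod_add_left_eq)
  qed
qed

lemma (in group) conj_auto: assumes g: "g \<in> carrier G" shows "(\<lambda>h\<in>carrier G. g \<otimes> h \<otimes> inv g) \<in> auto G"
proof -
  have "(\<lambda>h\<in>carrier G. g \<otimes> h \<otimes> inv g) \<in> Bij (carrier G)"
    using conjugation_is_bij[OF g] by (simp add: Bij_def)
  moreover have "(\<lambda>h\<in>carrier G. g \<otimes> h \<otimes> inv g) \<in> hom G G"
  proof -
    have c: "\<And>z. z \<in> carrier G \<Longrightarrow> inv g \<otimes> (g \<otimes> z) = z" using g by (simp add: m_assoc[symmetric])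
    show ?thesis unfolding hom_def using g by (auto simp: m_assoc c)
  qed
  ultimately show ?thesis by (simp add: auto_def)
qed

lemma mm3: "(b + a * (x mod m)) mod m = (b + a * x) mod (m::int)"
  by (metis mod_add_right_eq mod_mult_right_eq)

lemma mm4: "(b + (c + x mod m)) mod m = (b + (c + x)) mod (m::int)"
  by (metis mod_add_right_eq)

definition PsiA :: "nat \<Rightarrow> nat \<Rightarrow> nat \<Rightarrow> nat \<times> bool \<Rightarrow> nat \<times> bool" where
  "PsiA n a b = (\<lambda>x\<in>carrier (dihedral n). (NN n (int a * int (fst x) + (if snd x then int b else 0)), snd x))"

lemma PsiA_val: "r < n \<Longrightarrow> PsiA n a b (r, s) = (NN n (int a * int r + (if s then int b else 0)), s)"
  by (simp add: PsiA_def dih_carrier)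

lemma NN_eqI: "n > 0 \<Longrightarrow> x mod int n = y mod int n \<Longrightarrow> NN n x = NN n y"
  using N_eq by blast

lemma PsiA_auto: assumes n: "n \<ge> 3" and cop: "coprime a n" shows "PsiA n a b \<in> auto (dihedral n)"
proof -
  have np: "n > 0" using n by auto
  have hom: "PsiA n a b \<in> hom (dihedral n) (dihedral n)"
  proof (unfold hom_def, safe)
    fix x assume "x \<in> carrier (dihedral n)"
    then show "PsiA n a b x \<in> carrier (dihedral n)" using np
      by (cases x) (simp add: PsiA_val dih_carrier N_lt)
  next
    fix x y assume "x \<in> carrier (dihedral n)" "y \<in> carrier (dihedral n)"
    then obtain r1 s1 r2 s2 where x: "x = (r1, s1)" "r1 < n" and y: "y = (r2,s2)" "r2 < n"
      by (auto simp: dih_carrier)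
    show "PsiA n a b (x \<otimes>\<^bsub>dihedral n\<^esub> y) = PsiA n a b x \<otimes>\<^bsub>dihedral n\<^esub> PsiA n a b y"
      using x y np
      by (cases s1; cases s2) (auto simp: dih_mult' PsiA_val N_lt int_N intro!: NN_eqI, (simp_all add: mm3 mod_simps algebra_simps), (metis (no_types) add.commute add.left_commute mod_add_right_eq))
  qed
  have inj: "inj_on (PsiA n a b) (carrier (dihedral n))"
  proof (rule inj_onI)
    fix x y assume "x \<in> carrier (dihedral n)" "y \<in> carrier (dihedral n)" "PsiA n a b x = PsiA n a b y"
    then obtain r1 s r2 where x: "x = (r1, s)" "r1 < n" and y: "y = (r2,s)" "r2 < n"
      and e: "NN n (int a * int r1 + (if s then int b else 0)) = NN n (int a * int r2 + (if s then int b else 0))"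
      by (cases x, cases y) (auto simp: dih_carrier PsiA_val)
    then have "[int a * int r1 + (if s then int b else 0) = int a * int r2 + (if s then int b else 0)] (mod int n)"
      using N_eq[OF np] unfolding cong_def by blast
    then have "[int a * int r1 = int a * int r2] (mod int n)"
      using cong_add_rcancel by blast
    moreover have "coprime (int a) (int n)" using cop by simp
    ultimately have "[int r1 = int r2] (mod int n)"
      using cong_mult_lcancel by blast
    then have "r1 = r2" using x y by (simp add: cong_def nat_eq_via_int)
    then show "x = y" using x y by simp
  qed
  have "PsiA n a b ` carrier (dihedral n) = carrier (dihedral n)"
  proof (rule endo_inj_surj[OF _ _ inj])
    have fs: "PsiA n a b \<in> carrier (dihedral n) \<rightarrow> carrier (dihedral n)" using hom by (simp add: hom_def)
    show "PsiA n a b ` carrier (dihedral n) \<subseteq> carrier (dihedral n)" using funcset_image[OF fs] .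
  qed (simp add: dih_carrier)
  then have "PsiA n a b \<in> Bij (carrier (dihedral n))"
    using inj by (simp add: Bij_def bij_betw_def PsiA_def)
  then show ?thesis using hom by (simp add: auto_def)
qed

lemma NN_nat: "NN n (int c) = c mod n"
  unfolding NN_def by (simp flip: of_nat_mod)

lemma auto_char:
  assumes n: "n \<ge> 3" and psi: "\<psi> \<in> auto (dihedral n)"
  shows "coprime (fst (\<psi> (1,False))) n \<and> fst (\<psi> (1,False)) < n \<and> fst (\<psi> (0,True)) < n \<and>
         \<psi> = PsiA n (fst (\<psi> (1,False))) (fst (\<psi> (0,True)))"
proof -
  let ?G = "dihedral n"
  have np: "n > 0" and n1: "1 < n" and n2: "2 < n" using n by auto
  have grp: "group ?G" using dihedral_group n by simp
  have hom: "\<psi> \<in> hom ?G ?G" and bij: "bij_betw \<psi> (carrier ?G) (carrier ?G)"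
    and ext: "\<psi> \<in> extensional (carrier ?G)"
    using psi by (auto simp: auto_def Bij_def)
  have inj: "inj_on \<psi> (carrier ?G)" and surj: "\<psi> ` carrier ?G = carrier ?G"
    using bij by (auto simp: bij_betw_def)
  have fs: "\<And>x. x \<in> carrier ?G \<Longrightarrow> \<psi> x \<in> carrier ?G" using hom by (auto simp: hom_def)
  have mult: "\<And>x y. x \<in> carrier ?G \<Longrightarrow> y \<in> carrier ?G \<Longrightarrow> \<psi> (x \<otimes>\<^bsub>?G\<^esub> y) = \<psi> x \<otimes>\<^bsub>?G\<^esub> \<psi> y"
    using hom by (auto simp: hom_def)
  have one: "\<psi> (0, False) = (0, False)" using hom_one[OF hom grp grp] by (simp add: dih_one)
  obtain a s1 where r: "\<psi> (1, False) = (a, s1)" and a: "a < n"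
    using fs[of "(1, False)"] n1 by (cases "\<psi> (1, False)") (auto simp: dih_carrier)
  have s1: "\<not> s1"
  proof
    assume s1
    have "\<psi> ((1, False) \<otimes>\<^bsub>?G\<^esub> (1, False)) = (a, True) \<otimes>\<^bsub>?G\<^esub> (a, True)"
      using mult[of "(1,False)" "(1,False)"] r \<open>s1\<close> n1 by (simp add: dih_carrier)
    also have "\<dots> = (0, False)" using a by (simp add: dih_mult)
    finally have "\<psi> (Suc (Suc 0), False) = \<psi> (0, False)" using one n2 by (simp add: dih_mult)
    then have "(Suc (Suc 0), False) = (0::nat, False)"
      using inj np n2 unfolding inj_on_def dih_carrier
      by (metis (no_types, lifting) Suc_lessD UNIV_I lessThan_iff mem_Sigma_iff numeral_2_eq_2)
    then show False by simp
  qed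
  have rot: "\<And>j. j < n \<Longrightarrow> \<psi> (j, False) = ((a * j) mod n, False)"
  proof -
    fix j show "j < n \<Longrightarrow> \<psi> (j, False) = ((a * j) mod n, False)"
    proof (induction j)
      case 0 then show ?case using one by simp
    next
      case (Suc j)
      have "(Suc j, False) = (j, False) \<otimes>\<^bsub>?G\<^esub> (1, False)" using Suc.prems by (simp add: dih_mult)
      then have "\<psi> (Suc j, False) = ((a * j) mod n, False) \<otimes>\<^bsub>?G\<^esub> (a, False)"
        using mult[of "(j, False)" "(1, False)"] Suc r s1 n1 by (simp add: dih_carrier)
      also have "\<dots> = ((a * Suc j) mod n, False)" by (simp add: dih_mult mod_add_right_eq add.commute)
      finally show ?case .
    qed
  qed
  obtain b s2 where r2: "\<psi> (0, True) = (b, s2)" and b: "b < n"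
    using fs[of "(0, True)"] np by (cases "\<psi> (0, True)") (auto simp: dih_carrier)
  have split: "\<And>j. j < n \<Longrightarrow> (j, True) = (j, False) \<otimes>\<^bsub>?G\<^esub> (0, True)" by (simp add: dih_mult)
  have s2: s2
  proof (rule ccontr)
    assume "\<not> s2"
    have "\<forall>x\<in>carrier ?G. snd (\<psi> x) = False"
    proof
      fix x assume x: "x \<in> carrier ?G"
      then obtain j s where xj: "x = (j, s)" "j < n" by (auto simp: dih_carrier)
      show "snd (\<psi> x) = False"
      proof (cases s)
        case True
        then have "\<psi> x = ((a * j) mod n, False) \<otimes>\<^bsub>?G\<^esub> (b, False)"
          using xj split[of j] mult[of "(j, False)" "(0, True)"] rot[of j] r2 \<open>\<not> s2\<close> np by (simp add: dih_carrier)
        then show ?thesis by (simp add: dih_mult)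
      next
        case False then show ?thesis using xj rot by simp
      qed
    qed
    moreover have "(0, True) \<in> \<psi> ` carrier ?G" using surj np by (simp add: dih_carrier)
    ultimately show False by (metis (no_types, lifting) imageE snd_conv)
  qed
  have refl: "\<And>j. j < n \<Longrightarrow> \<psi> (j, True) = ((a * j + b) mod n, True)"
  proof -
    fix j assume j: "j < n"
    then have "\<psi> (j, True) = ((a * j) mod n, False) \<otimes>\<^bsub>?G\<^esub> (b, True)"
      using split[of j] mult[of "(j, False)" "(0, True)"] rot[of j] r2 s2 np by (simp add: dih_carrier)
    then show "\<psi> (j, True) = ((a * j + b) mod n, True)" by (simp add: dih_mult mod_add_left_eq)
  qed
  have cop: "coprime a n"
  proof -
    have "(1, False) \<in> \<psi> ` carrier ?G" using surj n1 by (simp add: dih_carrier)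
    then obtain j s where js: "j < n" "\<psi> (j, s) = (1, False)" by (auto simp: dih_carrier)
    then have "\<not> s" using refl by (cases s) auto
    then have "(a * j) mod n = 1" using js rot by simp
    show ?thesis
    proof (rule coprimeI)
      fix d assume "d dvd a" "d dvd n"
      then have "d dvd (a * j) mod n" by (simp add: dvd_mod)
      then show "is_unit d" using \<open>(a * j) mod n = 1\<close> by simp
    qed
  qed
  have eq: "\<psi> = PsiA n a b"
  proof
    fix x show "\<psi> x = PsiA n a b x"
    proof (cases "x \<in> carrier ?G")
      case True
      then obtain j s where xj: "x = (j, s)" "j < n" by (auto simp: dih_carrier)
      have i1: "NN n (int a * int j + int b) = (a * j + b) mod n" by (metis NN_nat of_nat_add of_nat_mult)
      have i2: "NN n (int a * int j) = (a * j) mod n" by (metis NN_nat of_nat_mult)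
      show ?thesis using xj rot refl by (cases s) (simp_all add: PsiA_val i1 i2)
    next
      case False
      have "\<psi> x = undefined" using extensional_arb[OF ext False] .
      moreover have "PsiA n a b x = undefined" unfolding PsiA_def using False by simp
      ultimately show ?thesis by simp
    qed
  qed
  show ?thesis using r s1 r2 s2 a b cop eq by simp
qed

definition kk :: "nat \<Rightarrow> nat \<Rightarrow> nat" where "kk n j = min (j mod n) (n - j mod n)"

lemma tb_iff: "k \<in> tau_bar n \<longleftrightarrow> 1 \<le> k \<and> 2 * k < n \<and> coprime k n"
  unfolding tau_bar_def tau_def by auto

lemma coprime_diff_n: assumes "coprime r n" "r \<le> n" shows "coprime (n - r) (n::nat)"
proof (rule coprimeI)
  fix d assume d: "d dvd n - r" "d dvd n"
  then have "d dvd n - (n - r)" using dvd_diff_nat by blast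
  then have "d dvd r" using assms(2) by simp
  then show "is_unit d" using d(2) assms(1) coprime_common_divisor by blast
qed

lemma K1: "k \<in> tau_bar n \<Longrightarrow> kk n k = k"
  unfolding kk_def tb_iff by auto

lemma K2: assumes n: "n \<ge> 3" and c: "coprime j n" shows "kk n j \<in> tau_bar n"
proof -
  define r where "r = j mod n"
  have rn: "r < n" using n by (simp add: r_def)
  have cr: "coprime r n" using c n unfolding r_def by (simp add: coprime_commute[of _ n] gcd_red_nat[symmetric] coprime_iff_gcd_eq_1)
  have r0: "r \<noteq> 0"
  proof
    assume "r = 0" then have "coprime 0 n" using cr by simp
    then show False using n by simp
  qed
  have r2: "2 * r \<noteq> n"
  proof
    assume h: "2 * r = n"
    then have "r dvd n" by auto
    then have "is_unit r" using cr coprime_common_divisor dvd_refl by blast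
    then have "r = 1" by simp
    then show False using h n by simp
  qed
  show ?thesis
  proof (cases "r \<le> n - r")
    case True
    then have "kk n j = r" unfolding kk_def r_def[symmetric] by simp
    then show ?thesis using True r0 r2 cr unfolding tb_iff by auto
  next
    case False
    then have "kk n j = n - r" unfolding kk_def r_def[symmetric] by simp
    moreover have "coprime (n - r) n" using coprime_diff_n cr rn by simp
    ultimately show ?thesis using False rn unfolding tb_iff by auto
  qed
qed

lemma K3: assumes "n > 0" shows "int (kk n j) mod int n = int j mod int n \<or> int (kk n j) mod int n = (- int j) mod int n"
proof (cases "j mod n \<le> n - j mod n")
  case True then have "kk n j = j mod n" unfolding kk_def by simp
  then show ?thesis by (simp add: of_nat_mod)
next
  case False then have "kk n j = n - j mod n" unfolding kk_def by simp
  moreover have "j mod n \<le> n" using assms by (simp add: less_imp_le)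
  ultimately have "int (kk n j) = int n - int j mod int n" by (simp add: of_nat_mod)
  then have "int (kk n j) mod int n = (int n - int j mod int n) mod int n" by simp
  also have "\<dots> = (int n - int j) mod int n" by (rule mod_diff_right_eq)
  also have "int n - int j = (- int j) + int n" by simp
  also have "((- int j) + int n) mod int n = (- int j) mod int n" by (rule mod_add_self2)
  finally have "int (kk n j) mod int n = (- int j) mod int n" .
  then show ?thesis by simp
qed

lemma K4: assumes n: "n > 0" and h: "int j mod int n = int j' mod int n \<or> int j mod int n = (- int j') mod int n"
  shows "kk n j = kk n j'"
  using h
proof
  assume "int j mod int n = int j' mod int n"
  then have "int (j mod n) = int (j' mod n)" by (simp only: of_nat_mod)
  then have "j mod n = j' mod n" by simp
  then show ?thesis by (simp add: kk_def)
next
  assume h2: "int j mod int n = (- int j') mod int n"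
  define r where "r = j mod n"
  define r' where "r' = j' mod n"
  have rn: "r < n" "r' < n" using n by (auto simp: r_def r'_def)
  have "(- int r') mod int n = (- int j') mod int n" by (simp add: r'_def of_nat_mod mod_minus_eq)
  moreover have "int r = int j mod int n" by (simp add: r_def of_nat_mod)
  ultimately have ir: "int r = (- int r') mod int n" using h2 by simp
  show ?thesis
  proof (cases "r' = 0")
    case True
    then have "r = 0" using ir by simp
    then show ?thesis using True unfolding kk_def r_def[symmetric] r'_def[symmetric] by simp
  next
    case False
    then have "(- int r') mod int n = int n - int r'" using rn
      by (simp add: zmod_zminus1_eq_if)
    then have "r = n - r'" using ir rn by simp
    then show ?thesis unfolding kk_def r_def[symmetric] r'_def[symmetric] using rn by (simp add: min.commute)
  qed
qed

lemma tb_pm: assumes k: "k \<in> tau_bar n" and k': "k' \<in> tau_bar n"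
  and h: "int k mod int n = int k' mod int n \<or> int k mod int n = (- int k') mod int n"
  shows "k = k'"
  using h
proof
  assume h: "int k mod int n = int k' mod int n"
  have "k < n" "k' < n" using k k' unfolding tb_iff by auto
  then show ?thesis using h by (rule nat_eq_via_int)
next
  assume hh: "int k mod int n = (- int k') mod int n"
  have "(int k + int k') mod int n = (int k mod int n + int k') mod int n" by (simp add: mod_add_left_eq)
  also have "\<dots> = ((- int k') mod int n + int k') mod int n" using hh by simp
  also have "\<dots> = (- int k' + int k') mod int n" by (simp only: mod_add_left_eq)
  finally have "(int k + int k') mod int n = 0" by simp
  then have "int n dvd int k + int k'" by auto
  moreover have "0 < int k + int k'" "int k + int k' < int n" using k k' unfolding tb_iff by auto
  ultimately have "int n \<le> int k + int k'" using zdvd_imp_le by blast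
  then show ?thesis using \<open>int k + int k' < int n\<close> by linarith
qed

lemma pm_cancel: assumes c: "coprime a (n::nat)"
  and h: "(int a * x) mod int n = (int a * y) mod int n \<or> (int a * x) mod int n = (- (int a * y)) mod int n"
  shows "x mod int n = y mod int n \<or> x mod int n = (- y) mod int n"
proof -
  have ci: "coprime (int a) (int n)" using c by simp
  from h show ?thesis
  proof
    assume "(int a * x) mod int n = (int a * y) mod int n"
    then have "[int a * x = int a * y] (mod int n)" by (simp add: cong_def)
    then have "[x = y] (mod int n)" using cong_mult_lcancel[OF ci] by blast
    then show ?thesis by (simp add: cong_def)
  next
    assume "(int a * x) mod int n = (- (int a * y)) mod int n"
    then have "[int a * x = int a * (- y)] (mod int n)" by (simp add: cong_def)
    then have "[x = - y] (mod int n)" using cong_mult_lcancel[OF ci] by blast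
    then show ?thesis by (simp add: cong_def)
  qed
qed

lemma neg_cong: "(- x) mod m = y mod m \<Longrightarrow> x mod m = (- y) mod (m::int)"
  by (metis mod_minus_cong minus_minus)

lemma K5: assumes n: "n \<ge> 3" and k: "k \<in> tau_bar n" and k': "k' \<in> tau_bar n" and c: "coprime a n"
  shows "kk n (a * k) = kk n (a * k') \<longleftrightarrow> k = k'"
proof
  assume e: "kk n (a * k) = kk n (a * k')"
  have np: "n > 0" using n by simp
  note h1 = K3[OF np, of "a * k"] and h2 = K3[OF np, of "a * k'"]
  define Kv where "Kv = int (kk n (a * k))"
  define Xv where "Xv = int a * int k"
  define Yv where "Yv = int a * int k'"
  have h1': "Kv mod int n = Xv mod int n \<or> Kv mod int n = (- Xv) mod int n" using h1 unfolding Kv_def Xv_def by simp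
  have h2': "Kv mod int n = Yv mod int n \<or> Kv mod int n = (- Yv) mod int n" using h2 e unfolding Kv_def Yv_def by simp
  have "Xv mod int n = Yv mod int n \<or> Xv mod int n = (- Yv) mod int n"
  proof (cases "Kv mod int n = Xv mod int n")
    case True
    then show ?thesis using h2' by auto
  next
    case False
    then have hx: "(- Xv) mod int n = Kv mod int n" using h1' by simp
    from h2' show ?thesis
    proof
      assume "Kv mod int n = Yv mod int n"
      then have "(- Xv) mod int n = Yv mod int n" using hx by simp
      then show ?thesis using neg_cong by blast
    next
      assume "Kv mod int n = (- Yv) mod int n"
      then have "(- Xv) mod int n = (- Yv) mod int n" using hx by simp
      then have "Xv mod int n = (- (- Yv)) mod int n" using neg_cong by blast
      then show ?thesis by simp
    qed
  qed
  then have "(int a * int k) mod int n = (int a * int k') mod int n \<or> (int a * int k) mod int n = (- (int a * int k')) mod int n"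
    unfolding Xv_def Yv_def .
  then have "int k mod int n = int k' mod int n \<or> int k mod int n = (- int k') mod int n" using pm_cancel[OF c] by blast
  then show "k = k'" using tb_pm k k' by blast
qed simp

lemma K6: assumes np: "n > 0"
  shows "kk n (a * kk n (a' * k)) = kk n (((a * a') mod n) * k)"
proof (rule K4[OF np])
  note h = K3[OF np, of "a' * k"]
  have e: "int ((a * a') mod n * k) mod int n = (int a * int a' * int k) mod int n"
    by (simp add: of_nat_mod mod_mult_left_eq)
  from h show "int (a * kk n (a' * k)) mod int n = int (a * a' mod n * k) mod int n \<or>
    int (a * kk n (a' * k)) mod int n = - int (a * a' mod n * k) mod int n"
  proof
    assume h1: "int (kk n (a' * k)) mod int n = int (a' * k) mod int n"
    have "int (a * kk n (a' * k)) mod int n = (int a * (int (kk n (a' * k)) mod int n)) mod int n"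
      by (simp add: mod_mult_right_eq)
    also have "\<dots> = (int a * int a' * int k) mod int n" using h1 by (simp add: mod_mult_right_eq mult.assoc)
    finally show ?thesis using e by simp
  next
    assume h1: "int (kk n (a' * k)) mod int n = (- int (a' * k)) mod int n"
    have "int (a * kk n (a' * k)) mod int n = (int a * (int (kk n (a' * k)) mod int n)) mod int n"
      by (simp add: mod_mult_right_eq)
    also have "\<dots> = (- (int a * int a' * int k)) mod int n" using h1
      by (simp add: mod_mult_right_eq mult.assoc)
    also have "\<dots> = - int (a * a' mod n * k) mod int n" using e by (metis mod_minus_eq)
    finally show ?thesis by simp
  qed
qed

definition aff :: "nat \<Rightarrow> nat \<Rightarrow> nat \<Rightarrow> nat \<Rightarrow> nat" where "aff n a b x = (a * x + b) mod n"

lemma aff_lt: "n > 0 \<Longrightarrow> aff n a b x < n" by (simp add: aff_def)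

lemma aff_inj: assumes c: "coprime a n" and x: "x < n" and y: "y < n" and e: "aff n a b x = aff n a b y"
  shows "x = y"
proof -
  have "[a * x + b = a * y + b] (mod n)" using e by (simp add: aff_def cong_def)
  then have "[a * x = a * y] (mod n)" using cong_add_rcancel_nat by blast
  then have "[x = y] (mod n)" using cong_mult_lcancel_nat c by blast
  then show ?thesis using x y by (simp add: cong_def)
qed

lemma mem_S_Inl[simp]: "Inl v \<in> Dgam_elems n \<longleftrightarrow> v < n" by (auto simp: Dgam_elems_def)
lemma mem_S_Inr[simp]: "Inr (k, e) \<in> Dgam_elems n \<longleftrightarrow> k \<in> tau_bar n \<and> e \<in> Eset n k" by (auto simp: Dgam_elems_def)
lemma S_cases: assumes "x \<in> Dgam_elems n"
  obtains v where "x = Inl v" "v < n" | k e where "x = Inr (k, e)" "k \<in> tau_bar n" "e \<in> Eset n k"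
  using assms by (auto simp: Dgam_elems_def)

lemma Eset_mem: "e \<in> Eset n k \<longleftrightarrow> (\<exists>x<n. e = {x, (x + k) mod n})" by (auto simp: Eset_def)
lemma Eset_sub: "n > 0 \<Longrightarrow> e \<in> Eset n k \<Longrightarrow> e \<subseteq> {..<n}" by (auto simp: Eset_def)
lemma tb_pos: "k \<in> tau_bar n \<Longrightarrow> 1 \<le> k \<and> k < n" unfolding tb_iff by auto

lemma ty_Inl[simp]: "Dgam_type n (Inl v) = (if even n \<and> odd v then -1 else 0)" by (simp add: Dgam_type_def)
lemma ty_Inr[simp]: "Dgam_type n (Inr (k, e)) = int k" by (simp add: Dgam_type_def)
lemma inc_simps[simp]:
  "Dgam_inc n (Inl u) (Inl v) = (even n \<and> (even u \<noteq> even v))"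
  "Dgam_inc n (Inl v) (Inr (k, e)) = (v \<in> e)"
  "Dgam_inc n (Inr (k, e)) (Inl v) = (v \<in> e)"
  "Dgam_inc n (Inr (i, e)) (Inr (j, f)) = (i \<noteq> j)"
  by (simp_all add: Dgam_inc_def)

lemma finite_S: assumes "n > 0" shows "finite (Dgam_elems n)"
proof -
  have "Dgam_elems n \<subseteq> Inl ` {..<n} \<union> Inr ` (tau_bar n \<times> Pow {..<n})"
    using assms Eset_sub by (auto simp: Dgam_elems_def)
  moreover have "tau_bar n \<subseteq> {..<n}" using tb_pos by auto
  then have "finite (tau_bar n)" using finite_subset finite_lessThan by metis
  then have "finite (Inl ` {..<n} \<union> Inr ` (tau_bar n \<times> Pow {..<n}) :: (nat + nat \<times> nat set) set)" by simp
  ultimately show ?thesis using finite_subset by metis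
qed

lemma odd_a: assumes "even (n::nat)" "coprime (a::nat) n" shows "odd a"
proof
  assume ea: "even a"
  have en: "2 dvd n" using assms(1) by simp
  have "is_unit (2::nat)" by (rule coprime_common_divisor[OF assms(2) ea en])
  then show False by simp
qed

lemma par: assumes "even n" "coprime a n" shows "odd (aff n a b v) \<longleftrightarrow> (odd v \<noteq> odd b)"
proof -
  have "odd a" using odd_a assms by blast
  have "aff n a b v mod 2 = (a * v + b) mod 2" unfolding aff_def using assms(1) by (simp add: mod_mod_cancel)
  then have "even (aff n a b v) \<longleftrightarrow> even (a * v + b)" by (simp only: even_iff_mod_2_eq_zero)
  then show ?thesis using \<open>odd a\<close> by auto
qed

lemma E2: assumes n: "n \<ge> 3" and k: "k \<in> tau_bar n" and e: "e \<in> Eset n k" and c: "coprime a n"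
  shows "aff n a b ` e \<in> Eset n (kk n (a * k))"
proof -
  have np: "n > 0" using n by simp
  obtain x where x: "x < n" "e = {x, (x + k) mod n}" using e Eset_mem by blast
  define y where "y = aff n a b x"
  define cc where "cc = (a * k) mod n"
  have yn: "y < n" "cc < n" using np by (simp_all add: y_def cc_def aff_lt)
  have f2: "aff n a b ((x + k) mod n) = (y + cc) mod n"
  proof -
    have "aff n a b ((x + k) mod n) = (a * (x + k) + b) mod n" unfolding aff_def by (metis mod_add_left_eq mod_mult_right_eq)
    also have "a * (x + k) + b = (a * x + b) + a * k" by (simp add: algebra_simps)
    also have "((a * x + b) + a * k) mod n = (y + cc) mod n" unfolding y_def cc_def aff_def by (rule mod_add_eq[symmetric])
    finally show ?thesis .
  qed
  have img: "aff n a b ` e = {y, (y + cc) mod n}" using x f2 y_def by simp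
  show ?thesis
  proof (cases "cc \<le> n - cc")
    case True
    then have "kk n (a * k) = cc" by (simp add: kk_def cc_def)
    then show ?thesis using img yn by (auto simp: Eset_def)
  next
    case False
    then have kv: "kk n (a * k) = n - cc" by (simp add: kk_def cc_def)
    define x' where "x' = (y + cc) mod n"
    have "(x' + (n - cc)) mod n = (y + cc + (n - cc)) mod n" unfolding x'_def by (simp add: mod_add_left_eq)
    also have "y + cc + (n - cc) = y + n" using yn by simp
    finally have "(x' + (n - cc)) mod n = y" using yn by simp
    then have "aff n a b ` e = {x', (x' + kk n (a * k)) mod n}" using img kv x'_def by auto
    moreover have "x' < n" using np by (simp add: x'_def)
    ultimately show ?thesis by (auto simp: Eset_def)
  qed
qed

lemma E3: assumes i: "i \<in> tau_bar n" and j: "j \<in> tau_bar n" and ei: "e \<in> Eset n i" and ej: "e \<in> Eset n j"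
  shows "i = j"
proof -
  obtain x where x: "x < n" "e = {x, (x + i) mod n}" using ei Eset_mem by blast
  obtain y where y: "y < n" "e = {y, (y + j) mod n}" using ej Eset_mem by blast
  have dj: "(x = y \<and> (x + i) mod n = (y + j) mod n) \<or> (x = (y + j) mod n \<and> (x + i) mod n = y)"
    using x y by (auto simp: doubleton_eq_iff)
  have ij: "i < n" "j < n" "1 \<le> i" "1 \<le> j" "2 * i < n" "2 * j < n" using i j unfolding tb_iff by auto
  from dj show ?thesis
  proof
    assume h: "x = y \<and> (x + i) mod n = (y + j) mod n"
    then have "[x + i = x + j] (mod n)" unfolding cong_def by metis
    then have "[i = j] (mod n)" using cong_add_lcancel_nat by blast
    then show ?thesis using ij by (simp add: cong_def)
  next
    assume h: "x = (y + j) mod n \<and> (x + i) mod n = y"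
    then have "((y + j) mod n + i) mod n = y mod n" using y by (metis mod_less)
    then have "(y + (j + i)) mod n = (y + 0) mod n" by (simp add: mod_add_left_eq add.assoc)
    then have "[y + (j + i) = y + 0] (mod n)" by (simp add: cong_def)
    then have "[j + i = 0] (mod n)" using cong_add_lcancel_nat by blast
    then have "n dvd j + i" by (simp add: cong_0_iff)
    then have "n \<le> j + i" using ij by (simp add: dvd_imp_le)
    then show ?thesis using ij by simp
  qed
qed

definition corrA :: "nat \<Rightarrow> nat \<Rightarrow> nat \<Rightarrow> nat + nat \<times> nat set \<Rightarrow> nat + nat \<times> nat set" where
  "corrA n a b = (\<lambda>x\<in>Dgam_elems n. case x of Inl v \<Rightarrow> Inl (aff n a b v)
      | Inr ke \<Rightarrow> Inr (kk n (a * fst ke), aff n a b ` snd ke))"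

lemma corrA_Inl: "v < n \<Longrightarrow> corrA n a b (Inl v) = Inl (aff n a b v)"
  by (simp add: corrA_def)
lemma corrA_Inr: "k \<in> tau_bar n \<Longrightarrow> e \<in> Eset n k \<Longrightarrow> corrA n a b (Inr (k, e)) = Inr (kk n (a * k), aff n a b ` e)"
  by (simp add: corrA_def)

lemma aff_inj_on: "coprime a n \<Longrightarrow> inj_on (aff n a b) {..<n}"
  using aff_inj by (auto simp: inj_on_def)

lemma corrA_in: assumes n: "n \<ge> 3" and c: "coprime a n" and x: "x \<in> Dgam_elems n"
  shows "corrA n a b x \<in> Dgam_elems n"
  using x
proof (cases rule: S_cases)
  case (1 v) then show ?thesis using n by (simp add: corrA_Inl aff_lt)
next
  case (2 k e)
  have "coprime (a * k) n" using c 2(2) unfolding tb_iff by simp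
  then show ?thesis using 2 K2[OF n] E2[OF n 2(2) 2(3) c] by (simp add: corrA_Inr)
qed

lemma corrA_inj: assumes n: "n \<ge> 3" and c: "coprime a n"
  shows "inj_on (corrA n a b) (Dgam_elems n)"
proof (rule inj_onI)
  fix x y assume x: "x \<in> Dgam_elems n" and y: "y \<in> Dgam_elems n" and e: "corrA n a b x = corrA n a b y"
  have np: "n > 0" using n by simp
  from x show "x = y"
  proof (cases rule: S_cases)
    case (1 v)
    from y show ?thesis
    proof (cases rule: S_cases)
      case (1 w) then show ?thesis using \<open>x = Inl v\<close> \<open>v < n\<close> e aff_inj[OF c] by (simp add: corrA_Inl)
    next
      case (2 k f) then show ?thesis using \<open>x = Inl v\<close> \<open>v < n\<close> e by (simp add: corrA_Inl corrA_Inr)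
    qed
  next
    case (2 k f)
    from y show ?thesis
    proof (cases rule: S_cases)
      case (1 w) then show ?thesis using 2 e by (simp add: corrA_Inl corrA_Inr)
    next
      case (2 k' f')
      have ee: "kk n (a * k) = kk n (a * k')" "aff n a b ` f = aff n a b ` f'"
        using 2 \<open>x = Inr (k, f)\<close> \<open>k \<in> tau_bar n\<close> \<open>f \<in> Eset n k\<close> e by (simp_all add: corrA_Inr)
      have "k = k'" using K5[OF n \<open>k \<in> tau_bar n\<close> \<open>k' \<in> tau_bar n\<close> c] ee(1) by simp
      moreover have "f = f'"
        using inj_on_image_eq_iff[OF aff_inj_on[OF c] Eset_sub[OF np \<open>f \<in> Eset n k\<close>] Eset_sub[OF np \<open>f' \<in> Eset n k'\<close>]] ee(2)
        by simp
      ultimately show ?thesis using 2 \<open>x = Inr (k, f)\<close> by simp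
    qed
  qed
qed

lemma corrA_Bij: assumes n: "n \<ge> 3" and c: "coprime a n"
  shows "corrA n a b \<in> Bij (Dgam_elems n)"
proof -
  have np: "n > 0" using n by simp
  have "corrA n a b ` Dgam_elems n = Dgam_elems n"
    by (rule endo_inj_surj[OF finite_S[OF np] _ corrA_inj[OF n c]]) (use corrA_in[OF n c] in blast)
  then have "bij_betw (corrA n a b) (Dgam_elems n) (Dgam_elems n)"
    using corrA_inj[OF n c] by (simp add: bij_betw_def)
  moreover have "corrA n a b \<in> extensional (Dgam_elems n)" by (simp add: corrA_def)
  ultimately show ?thesis by (simp add: Bij_def)
qed

lemma corrA_corr: assumes n: "n \<ge> 3" and c: "coprime a n"
  shows "corrA n a b \<in> correlations (Dgam_elems n) (Dgam_inc n) (Dgam_type n)"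
proof -
  have np: "n > 0" using n by simp
  have main: "(Dgam_type n x = Dgam_type n y \<longleftrightarrow> Dgam_type n (corrA n a b x) = Dgam_type n (corrA n a b y)) \<and>
      (Dgam_inc n x y \<longleftrightarrow> Dgam_inc n (corrA n a b x) (corrA n a b y))"
    if x: "x \<in> Dgam_elems n" and y: "y \<in> Dgam_elems n" for x y
  proof -
    have vv: "(Dgam_type n (Inl v) = Dgam_type n (Inl w) \<longleftrightarrow> Dgam_type n (Inl (aff n a b v)) = Dgam_type n (Inl (aff n a b w))) \<and>
       (Dgam_inc n (Inl v) (Inl w) \<longleftrightarrow> Dgam_inc n (Inl (aff n a b v)) (Inl (aff n a b w)))" for v w
    proof (cases "even n")
      case True then show ?thesis using par[OF True c] by auto
    next
      case False then show ?thesis by simp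
    qed
    have ve: "v < n \<Longrightarrow> f \<subseteq> {..<n} \<Longrightarrow> (aff n a b v \<in> aff n a b ` f \<longleftrightarrow> v \<in> f)" for v f
      using inj_on_image_mem_iff[OF aff_inj_on[OF c]] by simp
    have tyv: "Dgam_type n (Inl v) \<le> 0" for v by simp
    have tye: "k \<in> tau_bar n \<Longrightarrow> Dgam_type n (Inr (k, f)) \<ge> 1" for k f using tb_pos by simp
    have kkt: "k \<in> tau_bar n \<Longrightarrow> kk n (a * k) \<in> tau_bar n" for k
      using K2[OF n] c unfolding tb_iff by simp
    from x show ?thesis
    proof (cases rule: S_cases)
      case (1 v)
      from y show ?thesis
      proof (cases rule: S_cases)
        case (1 w) then show ?thesis using \<open>x = Inl v\<close> \<open>v < n\<close> vv by (simp add: corrA_Inl)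
      next
        case (2 k f)
        have "Dgam_type n (Inl v) \<noteq> Dgam_type n (Inr (k, f))"
             "Dgam_type n (Inl (aff n a b v)) \<noteq> Dgam_type n (Inr (kk n (a * k), aff n a b ` f))"
          using tyv tye 2 kkt by (metis not_one_le_zero order_trans)+
        then show ?thesis using \<open>x = Inl v\<close> \<open>v < n\<close> 2 ve Eset_sub[OF np] by (simp add: corrA_Inl corrA_Inr)
      qed
    next
      case (2 k f)
      from y show ?thesis
      proof (cases rule: S_cases)
        case (1 w)
        have "Dgam_type n (Inl w) \<noteq> Dgam_type n (Inr (k, f))"
             "Dgam_type n (Inl (aff n a b w)) \<noteq> Dgam_type n (Inr (kk n (a * k), aff n a b ` f))"
          using tyv tye 2 kkt by (metis not_one_le_zero order_trans)+
        then show ?thesis using \<open>y = Inl w\<close> \<open>w < n\<close> 2 ve Eset_sub[OF np] by (simp add: corrA_Inl corrA_Inr eq_commute)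
      next
        case (2 k' f')
        have "kk n (a * k) = kk n (a * k') \<longleftrightarrow> k = k'"
          using K5[OF n \<open>k \<in> tau_bar n\<close> \<open>k' \<in> tau_bar n\<close> c] .
        then show ?thesis using 2 \<open>x = Inr (k, f)\<close> \<open>k \<in> tau_bar n\<close> \<open>f \<in> Eset n k\<close> by (simp add: corrA_Inr)
      qed
    qed
  qed
  show ?thesis unfolding correlations_def using corrA_Bij[OF n c] main by blast
qed

lemma modl1: "(a * (z mod n) + b) mod n = (a * z + b) mod (n::nat)"
proof -
  have "(a * (z mod n) + b) mod n = ((a * (z mod n)) mod n + b) mod n" by (rule mod_add_left_eq[symmetric])
  also have "(a * (z mod n)) mod n = (a * z) mod n" by (rule mod_mult_right_eq)
  also have "((a * z) mod n + b) mod n = (a * z + b) mod n" by (rule mod_add_left_eq)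
  finally show ?thesis .
qed

lemma modl2: "((p mod n) * v + q mod n) mod n = (p * v + q) mod (n::nat)"
proof -
  have "((p mod n) * v + q mod n) mod n = ((p mod n) * v + q) mod n" by (rule mod_add_right_eq)
  also have "\<dots> = (((p mod n) * v) mod n + q) mod n" by (rule mod_add_left_eq[symmetric])
  also have "((p mod n) * v) mod n = (p * v) mod n" by (rule mod_mult_left_eq)
  also have "((p * v) mod n + q) mod n = (p * v + q) mod n" by (rule mod_add_left_eq)
  finally show ?thesis .
qed

lemma aff_comp: "aff n a b (aff n a' b' v) = aff n ((a * a') mod n) ((a * b' + b) mod n) v"
proof -
  have "aff n a b (aff n a' b' v) = (a * (a' * v + b') + b) mod n" unfolding aff_def by (rule modl1)
  also have "a * (a' * v + b') + b = (a * a') * v + (a * b' + b)" by (simp add: algebra_simps)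
  also have "((a * a') * v + (a * b' + b)) mod n = (((a * a') mod n) * v + (a * b' + b) mod n) mod n"
    by (rule modl2[symmetric])
  finally show ?thesis unfolding aff_def .
qed

lemma corrA_comp: assumes n: "n \<ge> 3" and c: "coprime a n" and c': "coprime a' n"
  shows "compose (Dgam_elems n) (corrA n a b) (corrA n a' b') = corrA n ((a * a') mod n) ((a * b' + b) mod n)"
proof
  fix x
  have np: "n > 0" using n by simp
  show "compose (Dgam_elems n) (corrA n a b) (corrA n a' b') x = corrA n ((a * a') mod n) ((a * b' + b) mod n) x"
  proof (cases "x \<in> Dgam_elems n")
    case True
    then have cx: "compose (Dgam_elems n) (corrA n a b) (corrA n a' b') x = corrA n a b (corrA n a' b' x)"
      by (simp add: compose_eq)
    from True show ?thesis
    proof (cases rule: S_cases)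
      case (1 v) then show ?thesis using cx np by (simp add: corrA_Inl aff_lt aff_comp)
    next
      case (2 k e)
      have k1: "kk n (a' * k) \<in> tau_bar n" using K2[OF n] c' 2(2) unfolding tb_iff by simp
      have e1: "aff n a' b' ` e \<in> Eset n (kk n (a' * k))" using E2[OF n 2(2) 2(3) c'] .
      have "corrA n a b (corrA n a' b' x) = Inr (kk n (a * kk n (a' * k)), aff n a b ` aff n a' b' ` e)"
        using 2 k1 e1 by (simp add: corrA_Inr)
      also have "\<dots> = Inr (kk n ((a * a') mod n * k), aff n ((a * a') mod n) ((a * b' + b) mod n) ` e)"
        using K6[OF np] by (simp add: image_image aff_comp)
      finally show ?thesis using cx 2 by (simp add: corrA_Inr)
    qed
  next
    case False then show ?thesis by (simp add: compose_def corrA_def)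
  qed
qed

lemma inc_sym: "Dgam_inc n x y = Dgam_inc n y x"
  by (cases x; cases y) (auto simp: Dgam_inc_def split: prod.splits)

lemma inc_sys: assumes n: "n \<ge> 3"
  shows "incidence_system (Dgam_elems n) (Dgam_inc n) (Dgam_type n) (Dgam_types n)"
proof -
  have np: "n > 0" using n by simp
  have fin: "finite (Dgam_types n)"
  proof -
    have "tau_bar n \<subseteq> {..<n}" using tb_pos by auto
    then have "finite (tau_bar n)" using finite_subset finite_lessThan by metis
    then show ?thesis by (simp add: Dgam_types_def)
  qed
  have img: "Dgam_type n ` Dgam_elems n = Dgam_types n"
  proof
    show "Dgam_type n ` Dgam_elems n \<subseteq> Dgam_types n"
    proof
      fix z assume "z \<in> Dgam_type n ` Dgam_elems n"
      then obtain x where x: "x \<in> Dgam_elems n" "z = Dgam_type n x" by blast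
      from x(1) show "z \<in> Dgam_types n"
        by (cases rule: S_cases) (use x(2) in \<open>auto simp: Dgam_types_def\<close>)
    qed
  next
    show "Dgam_types n \<subseteq> Dgam_type n ` Dgam_elems n"
    proof
      fix z assume z: "z \<in> Dgam_types n"
      have z0: "0 \<in> Dgam_type n ` Dgam_elems n"
        using np by (intro image_eqI[of _ _ "Inl 0"]) auto
      have z1: "even n \<Longrightarrow> -1 \<in> Dgam_type n ` Dgam_elems n"
        using n by (intro image_eqI[of _ _ "Inl 1"]) auto
      have z2: "k \<in> tau_bar n \<Longrightarrow> int k \<in> Dgam_type n ` Dgam_elems n" for k
      proof -
        assume k: "k \<in> tau_bar n"
        have "{0, (0 + k) mod n} \<in> Eset n k" using np unfolding Eset_mem by blast
        then show ?thesis using k by (intro image_eqI[of _ _ "Inr (k, {0, (0 + k) mod n})"]) auto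
      qed
      show "z \<in> Dgam_type n ` Dgam_elems n"
        using z z0 z1 z2 by (auto simp: Dgam_types_def split: if_splits)
    qed
  qed
  have sym: "\<forall>x\<in>Dgam_elems n. \<forall>y\<in>Dgam_elems n. Dgam_inc n x y \<longleftrightarrow> Dgam_inc n y x"
    using inc_sym by blast
  have noinc: "\<forall>x\<in>Dgam_elems n. \<forall>y\<in>Dgam_elems n. Dgam_type n x = Dgam_type n y \<longrightarrow> \<not> Dgam_inc n x y"
  proof (intro ballI impI)
    fix x y assume x: "x \<in> Dgam_elems n" and y: "y \<in> Dgam_elems n" and t: "Dgam_type n x = Dgam_type n y"
    from x show "\<not> Dgam_inc n x y"
    proof (cases rule: S_cases)
      case (1 v)
      from y show ?thesis
      proof (cases rule: S_cases)
        case (1 w) then show ?thesis using \<open>x = Inl v\<close> t by (auto split: if_splits)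
      next
        case (2 k f) then show ?thesis using \<open>x = Inl v\<close> t tb_pos[of k n] \<open>k \<in> tau_bar n\<close> by (auto split: if_splits)
      qed
    next
      case (2 k f)
      from y show ?thesis
      proof (cases rule: S_cases)
        case (1 w) then show ?thesis using \<open>x = Inr (k, f)\<close> t tb_pos[of k n] \<open>k \<in> tau_bar n\<close> by (auto split: if_splits)
      next
        case (2 k' f') then show ?thesis using \<open>x = Inr (k, f)\<close> t by auto
      qed
    qed
  qed
  show ?thesis unfolding incidence_system_def using fin img sym noinc by blast
qed

lemma edge_inj: assumes k: "k \<in> tau_bar n" and x: "x < n" and y: "y < n"
  and e: "{x, (x + k) mod n} = {y, (y + k) mod n}" shows "x = y"
proof (rule ccontr)
  assume ne: "x \<noteq> y"
  then have h: "x = (y + k) mod n \<and> (x + k) mod n = y" using e by (auto simp: doubleton_eq_iff)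
  have ij: "1 \<le> k" "2 * k < n" using k unfolding tb_iff by auto
  have "((y + k) mod n + k) mod n = y mod n" using h y by (metis mod_less)
  then have "(y + (k + k)) mod n = (y + 0) mod n" by (simp add: mod_add_left_eq add.assoc)
  then have "[y + (k + k) = y + 0] (mod n)" by (simp add: cong_def)
  then have "[k + k = 0] (mod n)" using cong_add_lcancel_nat by blast
  then have "n dvd k + k" by (simp add: cong_0_iff)
  then have "n \<le> k + k" using ij by (simp add: dvd_imp_le)
  then show False using ij by simp
qed

locale cctx =
  fixes n :: nat and al :: "nat + nat \<times> nat set \<Rightarrow> nat + nat \<times> nat set"
  assumes n3: "n > 3"
    and corr: "al \<in> correlations (Dgam_elems n) (Dgam_inc n) (Dgam_type n)"
begin

lemma np: "n > 0" using n3 by simp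

lemma corr': "al \<in> Bij (Dgam_elems n) \<and> (\<forall>x\<in>Dgam_elems n. \<forall>y\<in>Dgam_elems n.
        (Dgam_type n x = Dgam_type n y \<longleftrightarrow> Dgam_type n (al x) = Dgam_type n (al y)) \<and> (Dgam_inc n x y \<longleftrightarrow> Dgam_inc n (al x) (al y)))"
  using corr unfolding correlations_def by (rule CollectD)

lemma bij: "bij_betw al (Dgam_elems n) (Dgam_elems n)" and ext: "al \<in> extensional (Dgam_elems n)"
  using corr' unfolding Bij_def by auto

lemma inS: "x \<in> Dgam_elems n \<Longrightarrow> al x \<in> Dgam_elems n"
  using bij_betwE[OF bij] by blast

lemma inj: "inj_on al (Dgam_elems n)" using bij by (rule bij_betw_imp_inj_on)
lemma surj: "al ` Dgam_elems n = Dgam_elems n" using bij by (rule bij_betw_imp_surj_on)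

lemma teq: "x \<in> Dgam_elems n \<Longrightarrow> y \<in> Dgam_elems n \<Longrightarrow> Dgam_type n x = Dgam_type n y \<longleftrightarrow> Dgam_type n (al x) = Dgam_type n (al y)"
  using corr' by blast
lemma ieq: "x \<in> Dgam_elems n \<Longrightarrow> y \<in> Dgam_elems n \<Longrightarrow> Dgam_inc n x y \<longleftrightarrow> Dgam_inc n (al x) (al y)"
  using corr' by blast

definition C where "C x = {y \<in> Dgam_elems n. Dgam_type n y = Dgam_type n x}"

lemma C_img: assumes x: "x \<in> Dgam_elems n" shows "al ` C x = C (al x)"
proof
  show "al ` C x \<subseteq> C (al x)" using x teq inS by (auto simp: C_def)
next
  show "C (al x) \<subseteq> al ` C x"
  proof
    fix z assume z: "z \<in> C (al x)"
    then have "z \<in> al ` Dgam_elems n" using surj by (simp add: C_def)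
    then obtain y where y: "y \<in> Dgam_elems n" "z = al y" by blast
    then have "Dgam_type n y = Dgam_type n x" using z teq[OF y(1) x] by (simp add: C_def)
    then show "z \<in> al ` C x" using y by (auto simp: C_def)
  qed
qed

lemma C_card: assumes x: "x \<in> Dgam_elems n" shows "card (C (al x)) = card (C x)"
proof -
  have "inj_on al (C x)" using inj by (rule inj_on_subset) (auto simp: C_def)
  then have "card (al ` C x) = card (C x)" by (rule card_image)
  then show ?thesis using C_img[OF x] by simp
qed

lemma C_fin: "finite (C x)" using finite_S[OF np] by (simp add: C_def)

lemma card_vert: assumes ev: "even n" and v: "v < n" shows "card (C (Inl v)) < n"
proof -
  define u where "u = (if even v then 1 else 0::nat)"
  have u: "u < n" "even u \<noteq> even v" using n3 by (auto simp: u_def)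
  have "C (Inl v) \<subseteq> Inl ` ({..<n} - {u})"
  proof
    fix y assume y: "y \<in> C (Inl v)"
    then have yS: "y \<in> Dgam_elems n" by (simp add: C_def)
    then show "y \<in> Inl ` ({..<n} - {u})"
    proof (cases rule: S_cases)
      case (1 w) then show ?thesis using y u ev by (auto simp: C_def split: if_splits)
    next
      case (2 k e) then show ?thesis using y tb_pos[OF 2(2)] by (auto simp: C_def split: if_splits)
    qed
  qed
  then have "card (C (Inl v)) \<le> card (Inl ` ({..<n} - {u}) :: (nat + nat \<times> nat set) set)"
    by (rule card_mono[rotated]) simp
  also have "\<dots> = n - 1" using u by (simp add: card_image)
  finally show ?thesis using n3 by simp
qed

lemma card_edge: assumes k: "k \<in> tau_bar n" and e: "e \<in> Eset n k" shows "card (C (Inr (k, e))) \<ge> n"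
proof -
  let ?f = "\<lambda>x. Inr (k, {x, (x + k) mod n}) :: nat + nat \<times> nat set"
  have sub: "?f ` {..<n} \<subseteq> C (Inr (k, e))"
  proof
    fix z assume "z \<in> ?f ` {..<n}"
    then obtain x where x: "x < n" "z = ?f x" by blast
    have "{x, (x + k) mod n} \<in> Eset n k" using x(1) unfolding Eset_mem by blast
    then show "z \<in> C (Inr (k, e))" using x k by (simp add: C_def)
  qed
  have ij: "inj_on ?f {..<n}"
  proof (rule inj_onI)
    fix x y assume "x \<in> {..<n}" "y \<in> {..<n}" "?f x = ?f y"
    then show "x = y" using edge_inj[OF k] by simp
  qed
  have "card {..<n} \<le> card (C (Inr (k, e)))"
    using card_inj_on_le[OF ij sub C_fin] .
  then show ?thesis by simp
qed

definition Q where "Q x \<longleftrightarrow> (\<exists>y\<in>Dgam_elems n. Dgam_type n y \<noteq> Dgam_type n x \<and>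
   (\<forall>z\<in>Dgam_elems n. Dgam_type n z = Dgam_type n y \<longrightarrow> Dgam_inc n x z))"

lemma Q_back: assumes x: "x \<in> Dgam_elems n" and q: "Q (al x)" shows "Q x"
proof -
  obtain y' where y': "y' \<in> Dgam_elems n" "Dgam_type n y' \<noteq> Dgam_type n (al x)"
    "\<forall>z\<in>Dgam_elems n. Dgam_type n z = Dgam_type n y' \<longrightarrow> Dgam_inc n (al x) z"
    using q by (auto simp: Q_def)
  obtain y where y: "y \<in> Dgam_elems n" "y' = al y" using y'(1) surj by blast
  have "Dgam_type n y \<noteq> Dgam_type n x" using teq[OF y(1) x] y y' by simp
  moreover have "\<forall>z\<in>Dgam_elems n. Dgam_type n z = Dgam_type n y \<longrightarrow> Dgam_inc n x z"
  proof (intro ballI impI)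
    fix z assume z: "z \<in> Dgam_elems n" "Dgam_type n z = Dgam_type n y"
    then have "Dgam_type n (al z) = Dgam_type n y'" using teq[OF z(1) y(1)] y by simp
    then have "Dgam_inc n (al x) (al z)" using y'(3) inS[OF z(1)] by blast
    then show "Dgam_inc n x z" using ieq[OF x z(1)] by simp
  qed
  ultimately show ?thesis using y(1) by (auto simp: Q_def)
qed

lemma notQ_vert: assumes od: "odd n" and v: "v < n" shows "\<not> Q (Inl v)"
proof
  assume "Q (Inl v)"
  then obtain y where y: "y \<in> Dgam_elems n" "Dgam_type n y \<noteq> Dgam_type n (Inl v)"
    and all: "\<forall>z\<in>Dgam_elems n. Dgam_type n z = Dgam_type n y \<longrightarrow> Dgam_inc n (Inl v) z"
    by (auto simp: Q_def)
  from y(1) show False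
  proof (cases rule: S_cases)
    case (1 w) then show False using y(2) od by simp
  next
    case (2 j f)
    define x0 where "x0 = (v + 1) mod n"
    have x0: "x0 < n" using np by (simp add: x0_def)
    have z: "Inr (j, {x0, (x0 + j) mod n}) \<in> Dgam_elems n" using 2 x0 by (auto simp: Eset_def)
    have "Dgam_type n (Inr (j, {x0, (x0 + j) mod n})) = Dgam_type n y" using 2(1) by simp
    then have "Dgam_inc n (Inl v) (Inr (j, {x0, (x0 + j) mod n}))" using bspec[OF all z] by blast
    then have "v \<in> {x0, (x0 + j) mod n}" by simp
    moreover have "v \<noteq> x0"
    proof (cases "v + 1 < n")
      case True then show ?thesis by (simp add: x0_def)
    next
      case False then have "v + 1 = n" using v by simp
      then have "x0 = 0" by (simp add: x0_def)
      then show ?thesis using \<open>v + 1 = n\<close> n3 by simp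
    qed
    moreover have "v \<noteq> (x0 + j) mod n"
    proof
      assume h: "v = (x0 + j) mod n"
      have jj: "1 \<le> j" "2 * j < n" using 2(2) unfolding tb_iff by auto
      have "(v + (1 + j)) mod n = (v + 0) mod n" using h v by (simp add: x0_def mod_add_left_eq add.assoc)
      then have "[v + (1 + j) = v + 0] (mod n)" by (simp add: cong_def)
      then have "[1 + j = 0] (mod n)" using cong_add_lcancel_nat by blast
      then have "n dvd 1 + j" by (simp add: cong_0_iff)
      then have "n \<le> 1 + j" by (simp add: dvd_imp_le)
      then show False using jj by simp
    qed
    ultimately show False by simp
  qed
qed

lemma one_tb: "1 \<in> tau_bar n" using n3 unfolding tb_iff by simp
lemma two_tb: "odd n \<Longrightarrow> 2 \<in> tau_bar n"
proof -
  assume od: "odd n"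
  then have "n \<noteq> 4" by auto
  then have "4 < n" using n3 by simp
  then show ?thesis using od unfolding tb_iff by simp
qed

lemma Q_edge: assumes od: "odd n" and k: "k \<in> tau_bar n" shows "Q (Inr (k, e))"
proof -
  define j where "j = (if k = 1 then 2 else 1::nat)"
  have j: "j \<in> tau_bar n" "j \<noteq> k" using one_tb two_tb[OF od] by (auto simp: j_def)
  have yS: "Inr (j, {0, (0 + j) mod n}) \<in> Dgam_elems n" using j np by (auto simp: Eset_def)
  have all: "\<forall>z\<in>Dgam_elems n. Dgam_type n z = Dgam_type n (Inr (j, {0, (0 + j) mod n})) \<longrightarrow> Dgam_inc n (Inr (k, e)) z"
  proof (intro ballI impI)
    fix z assume z: "z \<in> Dgam_elems n" "Dgam_type n z = Dgam_type n (Inr (j, {0, (0 + j) mod n}))"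
    from z(1) show "Dgam_inc n (Inr (k, e)) z"
    proof (cases rule: S_cases)
      case (1 w) then show ?thesis using z(2) od tb_pos[OF j(1)] by simp
    next
      case (2 j' f) then show ?thesis using z(2) j by simp
    qed
  qed
  show ?thesis unfolding Q_def
    apply (rule bexI[OF _ yS])
    using j(2) all by simp
qed

lemma vert: assumes v: "v < n" shows "\<exists>w. al (Inl v) = Inl w \<and> w < n"
proof -
  have vS: "Inl v \<in> Dgam_elems n" using v by simp
  have aS: "al (Inl v) \<in> Dgam_elems n" using inS[OF vS] .
  from aS show ?thesis
  proof (cases rule: S_cases)
    case (1 w) then show ?thesis by simp
  next
    case (2 k e)
    show ?thesis
    proof (cases "even n")
      case True
      have "card (C (al (Inl v))) = card (C (Inl v))" using C_card[OF vS] .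
      then show ?thesis using card_vert[OF True v] card_edge[OF 2(2) 2(3)] 2(1) by simp
    next
      case False
      have "Q (al (Inl v))" using Q_edge[OF False 2(2)] 2(1) by simp
      then have "Q (Inl v)" using Q_back[OF vS] by simp
      then show ?thesis using notQ_vert[OF False v] by simp
    qed
  qed
qed

end

context cctx begin

definition pp where "pp v = projl (al (Inl v))"

lemma pp: "v < n \<Longrightarrow> al (Inl v) = Inl (pp v) \<and> pp v < n"
  using vert[of v] by (auto simp: pp_def)

lemma pi_inj: "inj_on pp {..<n}"
proof (rule inj_onI)
  fix v w assume v: "v \<in> {..<n}" and w: "w \<in> {..<n}" and e: "pp v = pp w"
  then have h: "al (Inl v) = al (Inl w)" using pp[of v] pp[of w] v w by simp
  have "Inl v = (Inl w :: nat + nat \<times> nat set)" using inj_onD[OF inj h] v w by simp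
  then show "v = w" by simp
qed

lemma pi_surj: "pp ` {..<n} = {..<n}"
  by (rule endo_inj_surj[OF finite_lessThan _ pi_inj]) (use pp in auto)

lemma edge: assumes k: "k \<in> tau_bar n" and e: "e \<in> Eset n k"
  shows "\<exists>k'. al (Inr (k, e)) = Inr (k', pp ` e) \<and> k' \<in> tau_bar n \<and> pp ` e \<in> Eset n k'"
proof -
  have xS: "Inr (k, e) \<in> Dgam_elems n" using k e by simp
  have eS: "e \<subseteq> {..<n}" using Eset_sub[OF np e] .
  from inS[OF xS] show ?thesis
  proof (cases rule: S_cases)
    case (1 w)
    then obtain v where v: "v < n" "w = pp v" using pi_surj by (metis imageE lessThan_iff)
    then have h: "al (Inl v) = al (Inr (k, e))" using pp[of v] 1 by simp
    have "Inl v = Inr (k, e)" using inj_onD[OF inj h] xS v by simp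
    then show ?thesis by simp
  next
    case (2 k' e')
    have e'S: "e' \<subseteq> {..<n}" using Eset_sub[OF np 2(3)] .
    have "\<forall>w. w \<in> e' \<longleftrightarrow> w \<in> pp ` e"
    proof
      fix w show "w \<in> e' \<longleftrightarrow> w \<in> pp ` e"
      proof (cases "w < n")
        case True
        then obtain v where v: "v < n" "w = pp v" using pi_surj by (metis imageE lessThan_iff)
        have "w \<in> e' \<longleftrightarrow> Dgam_inc n (al (Inl v)) (al (Inr (k, e)))" using pp[of v] v 2(1) by simp
        also have "\<dots> \<longleftrightarrow> Dgam_inc n (Inl v) (Inr (k, e))" using ieq[OF _ xS, of "Inl v"] v by simp
        also have "\<dots> \<longleftrightarrow> v \<in> e" by simp
        also have "\<dots> \<longleftrightarrow> w \<in> pp ` e" using inj_on_image_mem_iff[OF pi_inj, of v e] v eS by simp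
        finally show ?thesis .
      next
        case False
        then have "w \<notin> e'" using e'S by auto
        moreover have "w \<notin> pp ` e" using False eS pp by auto
        ultimately show ?thesis by simp
      qed
    qed
    then have "e' = pp ` e" by blast
    then show ?thesis using 2 by auto
  qed
qed

definition c0 where "c0 = fst (projr (al (Inr (1, {0, (0 + 1) mod n}))))"

lemma cstep: assumes x: "x < n" shows "pp ` {x, (x + 1) mod n} \<in> Eset n c0 \<and> c0 \<in> tau_bar n"
proof -
  have ex: "{x, (x + 1) mod n} \<in> Eset n 1" using x unfolding Eset_mem by blast
  have e0: "{0, (0 + 1) mod n} \<in> Eset n 1" using np unfolding Eset_mem by blast
  obtain kx where kx: "al (Inr (1, {x, (x + 1) mod n})) = Inr (kx, pp ` {x, (x + 1) mod n})" "kx \<in> tau_bar n"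
      "pp ` {x, (x + 1) mod n} \<in> Eset n kx"
    using edge[OF one_tb ex] by blast
  obtain k0 where k0: "al (Inr (1, {0, (0 + 1) mod n})) = Inr (k0, pp ` {0, (0 + 1) mod n})" "k0 \<in> tau_bar n"
    using edge[OF one_tb e0] by blast
  have c: "c0 = k0" using k0 by (simp add: c0_def)
  have m1: "Inr (1, {x, (x + 1) mod n}) \<in> Dgam_elems n" using ex one_tb by (simp only: mem_S_Inr)
  have m0: "Inr (1, {0, (0 + 1) mod n}) \<in> Dgam_elems n" using e0 one_tb by (simp only: mem_S_Inr)
  have "Dgam_type n (Inr (1, {x, (x + 1) mod n})) = Dgam_type n (Inr (1, {0, (0 + 1) mod n}))" by (simp only: ty_Inr)
  then have "Dgam_type n (al (Inr (1, {x, (x + 1) mod n}))) = Dgam_type n (al (Inr (1, {0, (0 + 1) mod n})))"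
    using teq[OF m1 m0] by blast
  then have "Dgam_type n (Inr (kx, pp ` {x, (x + 1) mod n})) = Dgam_type n (Inr (k0, pp ` {0, (0 + 1) mod n}))"
    by (simp only: kx(1) k0(1))
  then have "kx = k0" by (simp only: ty_Inr of_nat_eq_iff)
  then show ?thesis using kx c k0 by simp
qed

lemma cstep2: assumes x: "x < n"
  shows "int (pp ((x + 1) mod n)) mod int n = (int (pp x) + int c0) mod int n \<or>
         int (pp ((x + 1) mod n)) mod int n = (int (pp x) - int c0) mod int n"
proof -
  obtain y where y: "y < n" "pp ` {x, (x + 1) mod n} = {y, (y + c0) mod n}"
    using cstep[OF x] unfolding Eset_mem by blast
  have lt: "pp ((x + 1) mod n) < n" "pp x < n" using pp np x by auto
  have "{pp x, pp ((x + 1) mod n)} = {y, (y + c0) mod n}" using y by simp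
  then have "(pp x = y \<and> pp ((x + 1) mod n) = (y + c0) mod n) \<or> (pp x = (y + c0) mod n \<and> pp ((x + 1) mod n) = y)"
    by (auto simp: doubleton_eq_iff)
  then show ?thesis
  proof
    assume h: "pp x = y \<and> pp ((x + 1) mod n) = (y + c0) mod n"
    then have "int (pp ((x + 1) mod n)) = (int (pp x) + int c0) mod int n" by (simp add: of_nat_mod)
    then show ?thesis by simp
  next
    assume h: "pp x = (y + c0) mod n \<and> pp ((x + 1) mod n) = y"
    then have "int (pp x) = (int y + int c0) mod int n" by (simp add: of_nat_mod)
    then have "(int (pp x) - int c0) mod int n = ((int y + int c0) mod int n - int c0) mod int n" by simp
    also have "\<dots> = (int y + int c0 - int c0) mod int n" by (rule mod_diff_left_eq)
    also have "\<dots> = int y" using y by simp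
    finally show ?thesis using h lt by simp
  qed
qed

definition P where "P x = pp (x mod n)"
definition D where "D x = (int (P (Suc x)) - int (P x)) mod int n"

lemma P_lt: "P x < n" using pp[of "x mod n"] np by (simp add: P_def)

lemma D_pm: "D x = int c0 mod int n \<or> D x = (- int c0) mod int n"
proof -
  have xs: "Suc x mod n = (x mod n + 1) mod n" by (simp add: mod_Suc_eq)

  have xl: "x mod n < n" using np by simp
  have PS: "P (Suc x) = pp ((x mod n + 1) mod n)" using xs by (simp add: P_def)
  have P0: "P x = pp (x mod n)" by (simp add: P_def)
  have ip: "int (P (Suc x)) mod int n = int (P (Suc x))" using P_lt by simp
  from cstep2[OF xl] show ?thesis
  proof
    assume a: "int (pp ((x mod n + 1) mod n)) mod int n = (int (pp (x mod n)) + int c0) mod int n"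
    have "D x = (int (P (Suc x)) mod int n - int (P x)) mod int n" unfolding D_def using ip by simp
    also have "\<dots> = ((int (P x) + int c0) mod int n - int (P x)) mod int n" using a PS P0 by simp
    also have "\<dots> = (int (P x) + int c0 - int (P x)) mod int n" by (rule mod_diff_left_eq)
    finally show ?thesis by simp
  next
    assume a: "int (pp ((x mod n + 1) mod n)) mod int n = (int (pp (x mod n)) - int c0) mod int n"
    have "D x = (int (P (Suc x)) mod int n - int (P x)) mod int n" unfolding D_def using ip by simp
    also have "\<dots> = ((int (P x) - int c0) mod int n - int (P x)) mod int n" using a PS P0 by simp
    also have "\<dots> = (int (P x) - int c0 - int (P x)) mod int n" by (rule mod_diff_left_eq)
    finally show ?thesis by simp
  qed
qed

lemma c0_tb: "c0 \<in> tau_bar n" using cstep[of 0] np by simp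

lemma c_ne: "int c0 mod int n \<noteq> (- int c0) mod int n"
proof
  assume h: "int c0 mod int n = (- int c0) mod int n"
  have cc: "1 \<le> c0" "2 * c0 < n" using c0_tb unfolding tb_iff by auto
  have "(int c0 + int c0) mod int n = (int c0 mod int n + int c0) mod int n" by (simp add: mod_add_left_eq)
  also have "\<dots> = ((- int c0) mod int n + int c0) mod int n" using h by simp
  also have "\<dots> = (- int c0 + int c0) mod int n" by (rule mod_add_left_eq)
  finally have "(int c0 + int c0) mod int n = 0" by simp
  then have "int n dvd int c0 + int c0" by (simp only: dvd_eq_mod_eq_0)
  then have "int n \<le> int c0 + int c0" using cc by (intro zdvd_imp_le) auto
  then show False using cc by simp
qed

lemma D_sum: "(D (Suc x) + D x) mod int n = (int (P (Suc (Suc x))) - int (P x)) mod int n"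
proof -
  have "(D (Suc x) + D x) mod int n = ((int (P (Suc (Suc x))) - int (P (Suc x))) + (int (P (Suc x)) - int (P x))) mod int n"
    unfolding D_def by (rule mod_add_eq)
  then show ?thesis by simp
qed

lemma D_const: "D x = D 0"
proof (induction x)
  case 0 then show ?case by simp
next
  case (Suc x)
  have "D (Suc x) = D x"
  proof (rule ccontr)
    assume ne: "D (Suc x) \<noteq> D x"
    have "(D (Suc x) + D x) mod int n = 0"
    proof -
      have "(D (Suc x) = int c0 mod int n \<and> D x = (- int c0) mod int n) \<or>
            (D (Suc x) = (- int c0) mod int n \<and> D x = int c0 mod int n)"
        using D_pm[of x] D_pm[of "Suc x"] ne by auto
      then show ?thesis by (auto simp: mod_simps)
    qed
    then have "(int (P (Suc (Suc x))) - int (P x)) mod int n = 0" using D_sum by simp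
    then have "int n dvd int (P (Suc (Suc x))) - int (P x)" by (simp only: dvd_eq_mod_eq_0)
    then have "int (P (Suc (Suc x))) mod int n = int (P x) mod int n" using mod_eq_dvd_iff by blast
    then have "P (Suc (Suc x)) = P x" using P_lt nat_eq_via_int by blast
    then have "(Suc (Suc x)) mod n = x mod n" using inj_onD[OF pi_inj] np by (simp add: P_def)
    then have "[x + 2 = x + 0] (mod n)" by (simp add: cong_def)
    then have "[2 = 0] (mod n)" using cong_add_lcancel_nat by blast
    then have "n dvd 2" by (simp add: cong_0_iff)
    then have "n \<le> 2" by (simp add: dvd_imp_le)
    then show False using n3 by simp
  qed
  then show ?case using Suc by simp
qed

lemma P_lin: "int (P x) mod int n = (int (P 0) + int x * D 0) mod int n"
proof (induction x)
  case 0 then show ?case by simp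
next
  case (Suc x)
  have "int (P (Suc x)) mod int n = (int (P x) + (int (P (Suc x)) - int (P x))) mod int n" by simp
  also have "\<dots> = (int (P x) + D x) mod int n" unfolding D_def by (simp add: mod_add_right_eq)
  also have "\<dots> = (int (P x) mod int n + D 0) mod int n" using D_const[of x] by (simp add: mod_add_left_eq)
  also have "\<dots> = ((int (P 0) + int x * D 0) mod int n + D 0) mod int n" using Suc by simp
  also have "\<dots> = (int (P 0) + int x * D 0 + D 0) mod int n" by (rule mod_add_left_eq)
  also have "int (P 0) + int x * D 0 + D 0 = int (P 0) + int (Suc x) * D 0" by (simp add: algebra_simps)
  finally show ?case .
qed

definition aa where "aa = nat (D 0)"
definition bb where "bb = pp 0"

lemma aa_props: "aa < n \<and> coprime aa n \<and> int aa = D 0"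
proof -
  have cc: "1 \<le> c0" "c0 < n" "coprime c0 n" using c0_tb unfolding tb_iff by auto
  have D0: "0 \<le> D 0" "D 0 < int n" using np by (simp_all add: D_def)
  then have ia: "int aa = D 0" by (simp add: aa_def)
  from D_pm[of 0] show ?thesis
  proof
    assume "D 0 = int c0 mod int n"
    then have "aa = c0" using ia cc by simp
    then show ?thesis using cc ia by simp
  next
    assume "D 0 = (- int c0) mod int n"
    then have "D 0 = int n - int c0" using cc by (simp add: zmod_zminus1_eq_if)
    then have "aa = n - c0" using ia cc by simp
    then show ?thesis using cc ia coprime_diff_n[of c0 n] by simp
  qed
qed

lemma bb_lt: "bb < n" using pp[of 0] np by (simp add: bb_def)

lemma pi_aff: assumes v: "v < n" shows "pp v = aff n aa bb v"
proof -
  have "int (pp v) mod int n = (int bb + int v * int aa) mod int n"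
    using P_lin[of v] v aa_props by (simp add: P_def bb_def)
  also have "\<dots> = int (aff n aa bb v)" by (simp add: aff_def of_nat_mod algebra_simps)
  finally have "int (pp v) mod int n = int (aff n aa bb v) mod int n" using np by (simp add: aff_def of_nat_mod)
  then show ?thesis using nat_eq_via_int pp[OF v] aff_lt[OF np] by blast
qed

lemma al_corrA: "al = corrA n aa bb"
proof
  fix x show "al x = corrA n aa bb x"
  proof (cases "x \<in> Dgam_elems n")
    case True
    then show ?thesis
    proof (cases rule: S_cases)
      case (1 v) then show ?thesis using pp[of v] pi_aff[of v] by (simp add: corrA_Inl)
    next
      case (2 k e)
      obtain k' where k': "al (Inr (k, e)) = Inr (k', pp ` e)" "k' \<in> tau_bar n" "pp ` e \<in> Eset n k'"
        using edge[OF 2(2) 2(3)] by blast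
      have h: "\<And>v. v \<in> e \<Longrightarrow> pp v = aff n aa bb v" using pi_aff Eset_sub[OF np 2(3)] by auto
      have pe: "pp ` e = aff n aa bb ` e" using image_cong[OF refl h] .
      have c: "coprime aa n" using aa_props by simp
      have "aff n aa bb ` e \<in> Eset n (kk n (aa * k))" using E2[OF _ 2(2) 2(3) c] n3 by simp
      moreover have "kk n (aa * k) \<in> tau_bar n" using K2[of n "aa * k"] n3 c 2(2) unfolding tb_iff by simp
      ultimately have "k' = kk n (aa * k)" using E3 k' pe by metis
      then show ?thesis using 2 k' pe by (simp add: corrA_Inr)
    qed
  next
    case False
    have "al x = undefined" using extensional_arb[OF ext False] .
    moreover have "corrA n aa bb x = undefined" unfolding corrA_def using False by simp
    ultimately show ?thesis by simp
  qed
qed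

end

lemma corr_char: assumes n: "n > 3" and al: "al \<in> correlations (Dgam_elems n) (Dgam_inc n) (Dgam_type n)"
  shows "\<exists>a b. coprime a n \<and> a < n \<and> b < n \<and> al = corrA n a b"
proof -
  interpret cctx n al using n al by unfold_locales
  show ?thesis using aa_props bb_lt al_corrA by blast
qed

definition phi2 :: "nat \<Rightarrow> (nat \<times> bool \<Rightarrow> nat \<times> bool) \<Rightarrow> nat + nat \<times> nat set \<Rightarrow> nat + nat \<times> nat set" where
  "phi2 n \<psi> = corrA n (fst (\<psi> (1, False))) (fst (\<psi> (0, True)))"

lemma phi2_Psi: assumes n: "n \<ge> 3" and a: "a < n" and b: "b < n" shows "phi2 n (PsiA n a b) = corrA n a b"
proof -
  have "PsiA n a b (1, False) = (a, False)" using n a by (simp add: PsiA_val N_nat)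
  moreover have "PsiA n a b (0, True) = (b, True)" using n b by (simp add: PsiA_val N_nat)
  ultimately show ?thesis by (simp add: phi2_def)
qed

lemma phi2_auto: assumes n: "n \<ge> 3" and psi: "\<psi> \<in> auto (dihedral n)"
  obtains a b where "coprime a n" "a < n" "b < n" "\<psi> = PsiA n a b" "phi2 n \<psi> = corrA n a b"
  using auto_char[OF n psi] phi2_Psi[OF n] by metis

lemma phi2_in: assumes n: "n \<ge> 3" and psi: "\<psi> \<in> auto (dihedral n)"
  shows "phi2 n \<psi> \<in> correlations (Dgam_elems n) (Dgam_inc n) (Dgam_type n)"
proof -
  obtain a b where "coprime a n" "phi2 n \<psi> = corrA n a b" using phi2_auto[OF n psi] by metis
  then show ?thesis using corrA_corr[OF n] by simp
qed

lemma corr_Bij: "x \<in> correlations S inc t \<Longrightarrow> x \<in> Bij S" by (simp add: correlations_def)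

lemma phi2_comp: assumes n: "n \<ge> 3" and p1: "\<psi> \<in> auto (dihedral n)" and p2: "\<psi>' \<in> auto (dihedral n)"
  shows "phi2 n (compose (carrier (dihedral n)) \<psi> \<psi>') = compose (Dgam_elems n) (phi2 n \<psi>) (phi2 n \<psi>')"
proof -
  have np: "n > 0" and n1: "1 < n" using n by auto
  obtain a b where ab: "coprime a n" "a < n" "b < n" "\<psi> = PsiA n a b" "phi2 n \<psi> = corrA n a b"
    using phi2_auto[OF n p1] by metis
  obtain a' b' where ab': "coprime a' n" "a' < n" "b' < n" "\<psi>' = PsiA n a' b'" "phi2 n \<psi>' = corrA n a' b'"
    using phi2_auto[OF n p2] by metis
  have c1: "compose (carrier (dihedral n)) \<psi> \<psi>' (1, False) = ((a * a') mod n, False)"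
  proof -
    have "compose (carrier (dihedral n)) \<psi> \<psi>' (1, False) = \<psi> (\<psi>' (1, False))"
      using n1 by (simp add: compose_eq dih_carrier)
    also have "\<psi>' (1, False) = (a', False)" using ab' n1 by (simp add: PsiA_val N_nat)
    also have "\<psi> (a', False) = ((a * a') mod n, False)" using ab ab'(2) by (simp add: PsiA_val NN_nat flip: of_nat_mult)
    finally show ?thesis .
  qed
  have c2: "compose (carrier (dihedral n)) \<psi> \<psi>' (0, True) = ((a * b' + b) mod n, True)"
  proof -
    have "compose (carrier (dihedral n)) \<psi> \<psi>' (0, True) = \<psi> (\<psi>' (0, True))"
      using np by (simp add: compose_eq dih_carrier)
    also have "\<psi>' (0, True) = (b', True)" using ab' np by (simp add: PsiA_val N_nat)
    also have "\<psi> (b', True) = ((a * b' + b) mod n, True)" using ab ab'(3) by (simp add: PsiA_val NN_nat flip: of_nat_mult of_nat_add)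
    finally show ?thesis .
  qed
  have "phi2 n (compose (carrier (dihedral n)) \<psi> \<psi>') = corrA n ((a * a') mod n) ((a * b' + b) mod n)"
    using c1 c2 by (simp add: phi2_def)
  also have "\<dots> = compose (Dgam_elems n) (corrA n a b) (corrA n a' b')" using corrA_comp[OF n ab(1) ab'(1)] by simp
  finally show ?thesis using ab ab' by simp
qed

lemma auto_Bij: "x \<in> auto G \<Longrightarrow> x \<in> Bij (carrier G)" by (simp add: auto_def)

lemma Aut_mult: "x \<in> auto G \<Longrightarrow> y \<in> auto G \<Longrightarrow> x \<otimes>\<^bsub>AutoGroup G\<^esub> y = compose (carrier G) x y"
  by (simp add: AutoGroup_def BijGroup_def auto_Bij)

lemma Corr_mult: "x \<in> Bij S \<Longrightarrow> y \<in> Bij S \<Longrightarrow> x \<otimes>\<^bsub>CorrGroup S inc t\<^esub> y = compose S x y"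
  by (simp add: CorrGroup_def BijGroup_def)

lemma TP_mult: "x \<in> Bij S \<Longrightarrow> y \<in> Bij S \<Longrightarrow> x \<otimes>\<^bsub>TypePresGroup S inc t\<^esub> y = compose S x y"
  by (simp add: TypePresGroup_def BijGroup_def)

lemma Inn_mult: "x \<in> Bij (carrier G) \<Longrightarrow> y \<in> Bij (carrier G) \<Longrightarrow> x \<otimes>\<^bsub>InnGroup G\<^esub> y = compose (carrier G) x y"
  by (simp add: InnGroup_def BijGroup_def)

lemma phi2_hom: assumes n: "n \<ge> 3"
  shows "phi2 n \<in> hom (AutoGroup (dihedral n)) (CorrGroup (Dgam_elems n) (Dgam_inc n) (Dgam_type n))"
proof -
  have "phi2 n \<in> carrier (AutoGroup (dihedral n)) \<rightarrow> carrier (CorrGroup (Dgam_elems n) (Dgam_inc n) (Dgam_type n))"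
    using phi2_in[OF n] by (auto simp: AutoGroup_def CorrGroup_def BijGroup_def)
  moreover have "phi2 n (x \<otimes>\<^bsub>AutoGroup (dihedral n)\<^esub> y) =
      phi2 n x \<otimes>\<^bsub>CorrGroup (Dgam_elems n) (Dgam_inc n) (Dgam_type n)\<^esub> phi2 n y"
    if x: "x \<in> auto (dihedral n)" and y: "y \<in> auto (dihedral n)" for x y
    using phi2_comp[OF n x y] Aut_mult[OF x y] Corr_mult[where inc="Dgam_inc n" and t="Dgam_type n", OF corr_Bij[OF phi2_in[OF n x]] corr_Bij[OF phi2_in[OF n y]]]
    by simp
  ultimately show ?thesis by (auto simp: hom_def AutoGroup_def BijGroup_def)
qed

lemma phi2_inj: assumes n: "n \<ge> 3" shows "inj_on (phi2 n) (auto (dihedral n))"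
proof (rule inj_onI)
  fix x y assume x: "x \<in> auto (dihedral n)" and y: "y \<in> auto (dihedral n)" and e: "phi2 n x = phi2 n y"
  have np: "n > 0" and n1: "1 < n" using n by auto
  obtain a b where ab: "coprime a n" "a < n" "b < n" "x = PsiA n a b" "phi2 n x = corrA n a b"
    using phi2_auto[OF n x] by metis
  obtain a' b' where ab': "coprime a' n" "a' < n" "b' < n" "y = PsiA n a' b'" "phi2 n y = corrA n a' b'"
    using phi2_auto[OF n y] by metis
  have e2: "corrA n a b = corrA n a' b'" using e ab ab' by simp
  have "corrA n a b (Inl 0) = corrA n a' b' (Inl 0)" using e2 by simp
  then have bb: "b = b'" using np ab ab' by (simp add: corrA_Inl aff_def)
  have "corrA n a b (Inl 1) = corrA n a' b' (Inl 1)" using e2 by simp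
  then have "(a + b) mod n = (a' + b) mod n" using n1 bb by (simp add: corrA_Inl aff_def)
  then have "[a + b = a' + b] (mod n)" by (simp add: cong_def)
  then have "[a = a'] (mod n)" using cong_add_rcancel_nat by blast
  then have "a = a'" using ab ab' by (simp add: cong_def)
  then show "x = y" using ab ab' bb by simp
qed

lemma phi2_surj: assumes n: "n > 3"
  shows "phi2 n ` auto (dihedral n) = correlations (Dgam_elems n) (Dgam_inc n) (Dgam_type n)"
proof
  show "phi2 n ` auto (dihedral n) \<subseteq> correlations (Dgam_elems n) (Dgam_inc n) (Dgam_type n)"
    using phi2_in n by auto
next
  show "correlations (Dgam_elems n) (Dgam_inc n) (Dgam_type n) \<subseteq> phi2 n ` auto (dihedral n)"
  proof
    fix al assume al: "al \<in> correlations (Dgam_elems n) (Dgam_inc n) (Dgam_type n)"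
    obtain a b where ab: "coprime a n" "a < n" "b < n" "al = corrA n a b" using corr_char[OF n al] by blast
    have n3: "n \<ge> 3" using n by simp
    have "PsiA n a b \<in> auto (dihedral n)" using PsiA_auto[OF n3 ab(1)] .
    moreover have "phi2 n (PsiA n a b) = al" using phi2_Psi[OF n3 ab(2) ab(3)] ab(4) by simp
    ultimately show "al \<in> phi2 n ` auto (dihedral n)" by blast
  qed
qed

lemma NN_0[simp]: "NN n 0 = 0" by (simp add: NN_def)

lemma NN_1: "1 < n \<Longrightarrow> NN n 1 = 1" by (simp add: NN_def)

lemma inv_F: assumes n: "n \<ge> 3" and r: "r < n"
  shows "inv\<^bsub>dihedral n\<^esub> (r, False) = (NN n (- int r), False)"
proof -
  have np: "n > 0" using n by simp
  have grp: "group (dihedral n)" using dihedral_group n by simp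
  have "(NN n (- int r), False) \<otimes>\<^bsub>dihedral n\<^esub> (r, False) = \<one>\<^bsub>dihedral n\<^esub>"
    using r np by (simp add: dih_mult' dih_one N_add' N_nat)
  then show ?thesis using group.inv_equality[OF grp] r np by (simp add: dih_carrier N_lt)
qed

lemma inv_T: assumes n: "n \<ge> 3" and r: "r < n"
  shows "inv\<^bsub>dihedral n\<^esub> (r, True) = (r, True)"
proof -
  have np: "n > 0" using n by simp
  have grp: "group (dihedral n)" using dihedral_group n by simp
  have "(r, True) \<otimes>\<^bsub>dihedral n\<^esub> (r, True) = \<one>\<^bsub>dihedral n\<^esub>"
    using r np by (simp add: dih_mult' dih_one N_nat)
  then show ?thesis using group.inv_equality[OF grp] r np by (simp add: dih_carrier)
qed

lemma NN_m1: "n \<ge> 3 \<Longrightarrow> NN n (- 1) = n - 1"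
  unfolding NN_def by (simp add: zmod_zminus1_eq_if nat_diff_distrib)

definition cnj :: "nat \<Rightarrow> nat \<times> bool \<Rightarrow> nat \<times> bool \<Rightarrow> nat \<times> bool" where
  "cnj n g = (\<lambda>x\<in>carrier (dihedral n). g \<otimes>\<^bsub>dihedral n\<^esub> x \<otimes>\<^bsub>dihedral n\<^esub> inv\<^bsub>dihedral n\<^esub> g)"

lemma inner_auts_eq: "inner_auts (dihedral n) = {cnj n g | g. g \<in> carrier (dihedral n)}"
  by (simp add: inner_auts_def cnj_def)

lemma cnj_vals: assumes n: "n \<ge> 3" and r: "r < n"
  shows "cnj n (r, s) (1, False) = ((if s then n - 1 else 1), False)"
    and "cnj n (r, s) (0, True) = (NN n (2 * int r), True)"
proof -
  have np: "n > 0" and n1: "1 < n" using n by auto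
  show "cnj n (r, s) (1, False) = ((if s then n - 1 else 1), False)"
  proof (cases s)
    case True
    then show ?thesis using n1 r n
      by (simp add: cnj_def dih_carrier inv_T dih_mult' N_lt N_add N_add' N_sub N_sub' N_nat NN_m1)
  next
    case False
    then show ?thesis using n1 r n
      by (simp add: cnj_def dih_carrier inv_F dih_mult' N_lt N_add N_add' N_sub N_sub' N_nat NN_1)
  qed
  show "cnj n (r, s) (0, True) = (NN n (2 * int r), True)"
  proof (cases s)
    case True
    then show ?thesis using np r n
      by (simp add: cnj_def dih_carrier inv_T dih_mult' N_lt N_add N_add' N_sub N_sub' N_nat)
  next
    case False
    then show ?thesis using np r n
      by (simp add: cnj_def dih_carrier inv_F dih_mult' N_lt N_add N_add' N_sub N_sub' N_nat N_uminus)
  qed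
qed

lemma cnj_auto: assumes n: "n \<ge> 3" and g: "g \<in> carrier (dihedral n)" shows "cnj n g \<in> auto (dihedral n)"
  unfolding cnj_def using group.conj_auto[OF dihedral_group g] n by simp

lemma phi2_cnj: assumes n: "n \<ge> 3" and r: "r < n"
  shows "phi2 n (cnj n (r, s)) = corrA n (if s then n - 1 else 1) (NN n (2 * int r))"
  using cnj_vals[OF n r] by (simp add: phi2_def)

lemma tp_corrA: assumes n: "n \<ge> 3" and a: "a = 1 \<or> a = n - 1" and b: "even n \<longrightarrow> even b"
  and x: "x \<in> Dgam_elems n"
  shows "Dgam_type n (corrA n a b x) = Dgam_type n x"
proof -
  have np: "n > 0" using n by simp
  have c: "coprime a n"
  proof (cases "a = 1")
    case True then show ?thesis by simp
  next
    case False then have "a = n - 1" using a by simp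
    then show ?thesis using coprime_diff_n[of 1 n] n by simp
  qed
  from x show ?thesis
  proof (cases rule: S_cases)
    case (1 v)
    show ?thesis
    proof (cases "even n")
      case True then show ?thesis using 1 par[OF True c, of b v] b by (simp add: corrA_Inl)
    next
      case False then show ?thesis using 1 by (simp add: corrA_Inl)
    qed
  next
    case (2 k e)
    have "kk n (a * k) = k"
    proof (cases "a = 1")
      case True then show ?thesis using K1[OF 2(2)] by simp
    next
      case False
      then have a1: "a = n - 1" using a by simp
      have e: "int (a * k) = - int k + int k * int n" using a1 n by (simp add: of_nat_diff algebra_simps)
      have "int (a * k) mod int n = (- int k + int k * int n) mod int n" by (simp only: e)
      also have "\<dots> = (- int k) mod int n" by (rule mod_mult_self1)
      finally have "int (a * k) mod int n = (- int k) mod int n" .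
      then have "kk n (a * k) = kk n k" using K4[OF np] by blast
      then show ?thesis using K1[OF 2(2)] by simp
    qed
    then show ?thesis using 2 by (simp add: corrA_Inr)
  qed
qed

lemma tp_conv: assumes n: "n \<ge> 3" and a: "a < n" and b: "b < n"
  and tp: "\<forall>x\<in>Dgam_elems n. Dgam_type n (corrA n a b x) = Dgam_type n x"
  shows "(a = 1 \<or> a = n - 1) \<and> (even n \<longrightarrow> even b)"
proof -
  have np: "n > 0" and n1: "1 < n" using n by auto
  have "Dgam_type n (corrA n a b (Inl 0)) = Dgam_type n (Inl 0)" using tp np by simp
  then have eb: "even n \<longrightarrow> even b" using np b by (simp add: corrA_Inl aff_def split: if_splits)
  have one: "1 \<in> tau_bar n" using n unfolding tb_iff by simp
  have e1: "{0, (0 + 1) mod n} \<in> Eset n 1" using np unfolding Eset_mem by blast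
  have "Dgam_type n (corrA n a b (Inr (1, {0, (0 + 1) mod n}))) = Dgam_type n (Inr (1, {0, (0 + 1) mod n}))"
    using tp one e1 by (simp only: mem_S_Inr)
  then have "kk n (a * 1) = 1" using one e1 by (simp only: corrA_Inr ty_Inr of_nat_eq_iff)
  then have "min a (n - a) = 1" using a by (simp add: kk_def)
  then have "a = 1 \<or> a = n - 1" using a by (auto simp: min_def split: if_splits)
  then show ?thesis using eb by simp
qed

lemma carrier_TP: "carrier (TypePresGroup S inc t) = {al \<in> correlations S inc t. \<forall>x\<in>S. t (al x) = t x}"
  by (simp add: TypePresGroup_def)
lemma carrier_Corr: "carrier (CorrGroup S inc t) = correlations S inc t" by (simp add: CorrGroup_def)
lemma carrier_Aut: "carrier (AutoGroup G) = auto G" by (simp add: AutoGroup_def)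
lemma carrier_Inn: "carrier (InnGroup G) = inner_auts G" by (simp add: InnGroup_def)

lemma inn_sub: assumes n: "n \<ge> 3" shows "inner_auts (dihedral n) \<subseteq> auto (dihedral n)"
  using cnj_auto[OF n] by (auto simp: inner_auts_eq)

lemma phi1_in: assumes n: "n \<ge> 3" and x: "x \<in> inner_auts (dihedral n)"
  shows "phi2 n x \<in> carrier (TypePresGroup (Dgam_elems n) (Dgam_inc n) (Dgam_type n))"
proof -
  obtain r s where rs: "r < n" "x = cnj n (r, s)" using x by (auto simp: inner_auts_eq dih_carrier)
  have np: "n > 0" using n by simp
  have ev: "even n \<longrightarrow> even (NN n (2 * int r))"
  proof
    assume en: "even n"
    have "int (NN n (2 * int r)) = (2 * int r) mod int n" using np by (simp add: int_N)
    have m: "(2 * int r) mod int n = 2 * int r - (2 * int r) div int n * int n" by (simp add: minus_div_mult_eq_mod)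
    have "even (int n)" using en by simp
    then have "even (2 * int r - (2 * int r) div int n * int n)" by simp
    then have "even (int (NN n (2 * int r)))" using m \<open>int (NN n (2 * int r)) = (2 * int r) mod int n\<close> by simp
    then show "even (NN n (2 * int r))" by simp
  qed
  have "phi2 n x \<in> correlations (Dgam_elems n) (Dgam_inc n) (Dgam_type n)"
    using phi2_in[OF n] inn_sub[OF n] x by blast
  moreover have "\<forall>y\<in>Dgam_elems n. Dgam_type n (phi2 n x y) = Dgam_type n y"
    using tp_corrA[OF n _ ev] phi2_cnj[OF n rs(1)] rs(2) by auto
  ultimately show ?thesis by (simp add: carrier_TP)
qed

lemma phi1_hom: assumes n: "n \<ge> 3"
  shows "phi2 n \<in> hom (InnGroup (dihedral n)) (TypePresGroup (Dgam_elems n) (Dgam_inc n) (Dgam_type n))"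
proof -
  have "phi2 n \<in> carrier (InnGroup (dihedral n)) \<rightarrow> carrier (TypePresGroup (Dgam_elems n) (Dgam_inc n) (Dgam_type n))"
    using phi1_in[OF n] by (auto simp: carrier_Inn)
  moreover have "phi2 n (x \<otimes>\<^bsub>InnGroup (dihedral n)\<^esub> y) =
      phi2 n x \<otimes>\<^bsub>TypePresGroup (Dgam_elems n) (Dgam_inc n) (Dgam_type n)\<^esub> phi2 n y"
    if x: "x \<in> inner_auts (dihedral n)" and y: "y \<in> inner_auts (dihedral n)" for x y
  proof -
    have xa: "x \<in> auto (dihedral n)" and ya: "y \<in> auto (dihedral n)" using inn_sub[OF n] x y by auto
    have "x \<otimes>\<^bsub>InnGroup (dihedral n)\<^esub> y = compose (carrier (dihedral n)) x y"
      using Inn_mult[OF auto_Bij[OF xa] auto_Bij[OF ya]] .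
    moreover have "phi2 n x \<otimes>\<^bsub>TypePresGroup (Dgam_elems n) (Dgam_inc n) (Dgam_type n)\<^esub> phi2 n y
        = compose (Dgam_elems n) (phi2 n x) (phi2 n y)"
      using TP_mult[where inc="Dgam_inc n" and t="Dgam_type n", OF corr_Bij[OF phi2_in[OF n xa]] corr_Bij[OF phi2_in[OF n ya]]] .
    ultimately show ?thesis using phi2_comp[OF n xa ya] by simp
  qed
  ultimately show ?thesis by (auto simp: hom_def carrier_Inn)
qed

lemma phi1_surj: assumes n: "n > 3"
  shows "phi2 n ` inner_auts (dihedral n) = carrier (TypePresGroup (Dgam_elems n) (Dgam_inc n) (Dgam_type n))"
proof
  have n3: "n \<ge> 3" using n by simp
  show "phi2 n ` inner_auts (dihedral n) \<subseteq> carrier (TypePresGroup (Dgam_elems n) (Dgam_inc n) (Dgam_type n))"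
    using phi1_in[OF n3] by auto
  show "carrier (TypePresGroup (Dgam_elems n) (Dgam_inc n) (Dgam_type n)) \<subseteq> phi2 n ` inner_auts (dihedral n)"
  proof
    fix al assume al: "al \<in> carrier (TypePresGroup (Dgam_elems n) (Dgam_inc n) (Dgam_type n))"
    then have alc: "al \<in> correlations (Dgam_elems n) (Dgam_inc n) (Dgam_type n)"
      and tp: "\<forall>x\<in>Dgam_elems n. Dgam_type n (al x) = Dgam_type n x" by (auto simp: carrier_TP)
    obtain a b where ab: "coprime a n" "a < n" "b < n" "al = corrA n a b" using corr_char[OF n alc] by blast
    have cv: "(a = 1 \<or> a = n - 1) \<and> (even n \<longrightarrow> even b)" using tp_conv[OF n3 ab(2) ab(3)] tp ab(4) by simp
    define r where "r = (if even b then b div 2 else (b + n) div 2)"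
    have r2: "2 * r = b \<or> 2 * r = b + n"
    proof (cases "even b")
      case True then show ?thesis by (simp add: r_def)
    next
      case False then have "odd n" using cv by auto
      then have "even (b + n)" using False by simp
      then show ?thesis using False by (simp add: r_def)
    qed
    have rn: "r < n" using r2 ab(3) by auto
    have nb: "NN n (2 * int r) = b"
    proof -
      have "NN n (2 * int r) = (2 * r) mod n" using NN_nat[of n "2 * r"] by simp
      then show ?thesis using r2 ab(3) by auto
    qed
    define s where "s = (a \<noteq> 1)"
    have as: "(if s then n - 1 else 1) = a" using cv by (auto simp: s_def)
    have "phi2 n (cnj n (r, s)) = al" using phi2_cnj[OF n3 rn, of s] nb as ab(4) by simp
    moreover have "cnj n (r, s) \<in> inner_auts (dihedral n)" using rn by (auto simp: inner_auts_eq dih_carrier)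
    ultimately show "al \<in> phi2 n ` inner_auts (dihedral n)" by blast
  qed
qed

theorem mainTheorem1:
  fixes n :: nat
  assumes "n \<ge> 3"
  shows "(n > 3 \<longrightarrow> igr_group (dihedral n) (Dgam_elems n) (Dgam_inc n) (Dgam_type n) (Dgam_types n))
       \<and> (n = 3 \<longrightarrow> weak_igr_group (dihedral n) (Dgam_elems n) (Dgam_inc n) (Dgam_type n) (Dgam_types n))"
proof (intro conjI impI)
  have n3: "n \<ge> 3" using assms .
  have inj1: "inj_on (phi2 n) (inner_auts (dihedral n))"
    using inj_on_subset[OF phi2_inj[OF n3] inn_sub[OF n3]] .
  {
    assume n: "n > 3"
    have i1: "phi2 n \<in> iso (InnGroup (dihedral n)) (TypePresGroup (Dgam_elems n) (Dgam_inc n) (Dgam_type n))"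
      unfolding iso_def using phi1_hom[OF n3] inj1 phi1_surj[OF n] by (simp add: bij_betw_def carrier_Inn)
    have i2: "phi2 n \<in> iso (AutoGroup (dihedral n)) (CorrGroup (Dgam_elems n) (Dgam_inc n) (Dgam_type n))"
      unfolding iso_def using phi2_hom[OF n3] phi2_inj[OF n3] phi2_surj[OF n]
      by (simp add: bij_betw_def carrier_Aut carrier_Corr)
    show "igr_group (dihedral n) (Dgam_elems n) (Dgam_inc n) (Dgam_type n) (Dgam_types n)"
      unfolding igr_group_def igr_def using inc_sys[OF n3] i1 i2 by blast
  }
  {
    assume "n = 3"
    show "weak_igr_group (dihedral n) (Dgam_elems n) (Dgam_inc n) (Dgam_type n) (Dgam_types n)"
      unfolding weak_igr_group_def weak_igr_def
      using inc_sys[OF n3] phi1_hom[OF n3] inj1 phi2_hom[OF n3] phi2_inj[OF n3]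
      by (auto simp: carrier_Inn carrier_Aut)
  }
qed

end
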